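(* In the setting described in the context, let $U_0,\dots,U_d$ be one of the six decompositions below, with $U_{-1}=U_{d+1}=0$. Then for $0\le i\le d$: $[0D]$: $(B-bq^{d-2i}I)U_i\subseteq U_{i-1}$ and $(B^*-b^*q^{d-2i}I)U_i\subseteq U_{i+1}$; $[0^*D^*]$: $(B-bq^{2i-d}I)U_i\subseteq U_{i-1}$ and $(B^*-b^*q^{2i-d}I)U_i\subseteq U_{i+1}$; $[0^*D]$: $(B-bq^{2i-d}I)U_i\subseteq U_{i-1}$ and $(B^*-b^*q^{d-2i}I)U_i\subseteq U_{i+1}$; $[0^*0]$: $(B-bq^{2i-d}I)U_i=0$ and $B^*U_i\subseteq U_{i-1}+U_i+U_{i+1}$; $[D^*0]$: $(B-bq^{2i-d}I)U_i\subseteq U_{i+1}$ and $(B^*-b^*q^{d-2i}I)U_i\subseteq U_{i-1}$; $[D^*D]$: $BU_i\subseteq U_{i-1}+U_i+U_{i+1}$ and $(B^*-b^*q^{d-2i}I)U_i=0$.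
   Context: $\mathbb K$ is an algebraically closed field, $q\in\mathbb K$ nonzero and not a root of unity, $V$ a nonzero finite-dimensional $\mathbb K$-vector space. A tridiagonal pair on $V$ is an ordered pair $A,A^*$ of linear maps $V\to V$ such that: (i) each of $A,A^*$ is diagonalizable; (ii) there is an ordering $V_0,\dots,V_d$ of the eigenspaces of $A$ with $A^*V_i\subseteq V_{i-1}+V_i+V_{i+1}$ ($V_{-1}=V_{d+1}=0$); (iii) there is an ordering $V^*_0,\dots,V^*_\delta$ of the eigenspaces of $A^*$ with $AV^*_i\subseteq V^*_{i-1}+V^*_i+V^*_{i+1}$ ($V^*_{-1}=V^*_{\delta+1}=0$); (iv) no subspace $W\ne0,V$ satisfies $AW\subseteq W$, $A^*W\subseteq W$. It is known $d=\delta$; orderings as in (ii),(iii) are called standard. Setting: $A,A^*$ is a tridiagonal pair on $V$; $V_0,\dots,V_d$ (resp. $V^*_0,\dots,V^*_d$) is a standard ordering of the eigenspaces of $A$ (resp. $A^*$); the eigenvalue of $A$ on $V_i$ is $aq^{2i-d}$ and that of $A^*$ on $V^*_i$ is $a^*q^{d-2i}$ for some nonzero $a,a^*\in\mathbb K$; $b,b^*\in\mathbb K$ are nonzero. The six decompositions of $V$ (sequences of nonzero subspaces whose sum is direct and equals $V$) are, for $0\le i\le d$: $[0D]$: $U_i=V_i$; $[0^*D^*]$: $U_i=V^*_i$; $[0^*D]$: $U_i=(V^*_0+\cdots+V^*_i)\cap(V_i+\cdots+V_d)$; $[0^*0]$: $U_i=(V^*_0+\cdots+V^*_i)\cap(V_0+\cdots+V_{d-i})$;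 $[D^*0]$: $U_i=(V^*_{d-i}+\cdots+V^*_d)\cap(V_0+\cdots+V_{d-i})$; $[D^*D]$: $U_i=(V^*_{d-i}+\cdots+V^*_d)\cap(V_i+\cdots+V_d)$. $B:V\to V$ is the linear map acting as $bq^{2i-d}I$ on the $i$th subspace of $[0^*0]$ for each $i$, and $B^*:V\to V$ is the linear map acting as $b^*q^{d-2i}I$ on the $i$th subspace of $[D^*D]$ for each $i$. *)

theory Defs
  imports Main "HOL-Computational_Algebra.Polynomial"
begin

text \<open>Algebraically closed field: every nonconstant polynomial has a root.\<close>
definition alg_closed :: "'k::field itself \<Rightarrow> bool" where
  "alg_closed _ \<longleftrightarrow> (\<forall>p :: 'k poly. 0 < degree p \<longrightarrow> (\<exists>x. poly p x = 0))"

definition not_root_of_unity :: "'k::field \<Rightarrow> bool" where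
  "not_root_of_unity q \<longleftrightarrow> (\<forall>n::nat. 0 < n \<longrightarrow> q ^ n \<noteq> 1)"

text \<open>Eigenspace of a map A for a scalar th (the space V is the whole type 'v).\<close>
definition eigsp :: "('k \<Rightarrow> 'v \<Rightarrow> 'v) \<Rightarrow> ('v \<Rightarrow> 'v) \<Rightarrow> 'k \<Rightarrow> 'v set" where
  "eigsp scale A th = {v. A v = scale th v}"

text \<open>Sum of a family of subspaces over an index set.\<close>
definition ssum :: "('i \<Rightarrow> 'v::comm_monoid_add set) \<Rightarrow> 'i set \<Rightarrow> 'v set" where
  "ssum U I = {(\<Sum>i\<in>I. f i) | f. \<forall>i\<in>I. f i \<in> U i}"

text \<open>Extension of a sequence of subspaces U_0..U_d by U_j = 0 for j outside [0,d].\<close>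
definition ext :: "nat \<Rightarrow> (nat \<Rightarrow> 'v::zero set) \<Rightarrow> int \<Rightarrow> 'v set" where
  "ext d U j = (if 0 \<le> j \<and> j \<le> int d then U (nat j) else {0})"

definition diagonalizable :: "('k::field \<Rightarrow> 'v::ab_group_add \<Rightarrow> 'v) \<Rightarrow> ('v \<Rightarrow> 'v) \<Rightarrow> bool" where
  "diagonalizable scale A \<longleftrightarrow> module.span scale (\<Union>th. eigsp scale A th) = UNIV"

text \<open>th_0..th_d is an ordering of the eigenvalues of A (so eigsp A (th i), i=0..d, is an
  ordering of the eigenspaces of A), and it is standard with respect to As.\<close>
definition standard_ordering ::
  "('k::field \<Rightarrow> 'v::ab_group_add \<Rightarrow> 'v) \<Rightarrow> ('v \<Rightarrow> 'v) \<Rightarrow> ('v \<Rightarrow> 'v) \<Rightarrow> nat \<Rightarrow> (nat \<Rightarrow> 'k) \<Rightarrow> bool" where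
  "standard_ordering scale A As d th \<longleftrightarrow>
     inj_on th {..d} \<and>
     (\<forall>i\<le>d. eigsp scale A (th i) \<noteq> {0}) \<and>
     (\<forall>mu. eigsp scale A mu \<noteq> {0} \<longrightarrow> mu \<in> th ` {..d}) \<and>
     (\<forall>i\<le>d. As ` eigsp scale A (th i) \<subseteq>
        ssum (ext d (\<lambda>j. eigsp scale A (th j))) {int i - 1 .. int i + 1})"

definition tridiagonal_pair :: "('k::field \<Rightarrow> 'v::ab_group_add \<Rightarrow> 'v) \<Rightarrow> ('v \<Rightarrow> 'v) \<Rightarrow> ('v \<Rightarrow> 'v) \<Rightarrow> bool" where
  "tridiagonal_pair scale A As \<longleftrightarrow>
     Vector_Spaces.linear scale scale A \<and> Vector_Spaces.linear scale scale As \<and>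
     diagonalizable scale A \<and> diagonalizable scale As \<and>
     (\<exists>d th. standard_ordering scale A As d th) \<and>
     (\<exists>delta th. standard_ordering scale As A delta th) \<and>
     (\<forall>W. module.subspace scale W \<and> A ` W \<subseteq> W \<and> As ` W \<subseteq> W \<longrightarrow> W = {0} \<or> W = UNIV)"

text \<open>The six decompositions, given V_0..V_d (V) and V*_0..V*_d (Vs).\<close>
definition dec_0D :: "nat \<Rightarrow> (nat \<Rightarrow> 'v::comm_monoid_add set) \<Rightarrow> (nat \<Rightarrow> 'v set) \<Rightarrow> nat \<Rightarrow> 'v set" where
  "dec_0D d V Vs i = V i"
definition dec_0sDs :: "nat \<Rightarrow> (nat \<Rightarrow> 'v::comm_monoid_add set) \<Rightarrow> (nat \<Rightarrow> 'v set) \<Rightarrow> nat \<Rightarrow> 'v set" where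
  "dec_0sDs d V Vs i = Vs i"
definition dec_0sD :: "nat \<Rightarrow> (nat \<Rightarrow> 'v::comm_monoid_add set) \<Rightarrow> (nat \<Rightarrow> 'v set) \<Rightarrow> nat \<Rightarrow> 'v set" where
  "dec_0sD d V Vs i = ssum Vs {0..i} \<inter> ssum V {i..d}"
definition dec_0s0 :: "nat \<Rightarrow> (nat \<Rightarrow> 'v::comm_monoid_add set) \<Rightarrow> (nat \<Rightarrow> 'v set) \<Rightarrow> nat \<Rightarrow> 'v set" where
  "dec_0s0 d V Vs i = ssum Vs {0..i} \<inter> ssum V {0..d-i}"
definition dec_Ds0 :: "nat \<Rightarrow> (nat \<Rightarrow> 'v::comm_monoid_add set) \<Rightarrow> (nat \<Rightarrow> 'v set) \<Rightarrow> nat \<Rightarrow> 'v set" where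
  "dec_Ds0 d V Vs i = ssum Vs {d-i..d} \<inter> ssum V {0..d-i}"
definition dec_DsD :: "nat \<Rightarrow> (nat \<Rightarrow> 'v::comm_monoid_add set) \<Rightarrow> (nat \<Rightarrow> 'v set) \<Rightarrow> nat \<Rightarrow> 'v set" where
  "dec_DsD d V Vs i = ssum Vs {d-i..d} \<inter> ssum V {i..d}"

text \<open>(M - c I) applied to a set.\<close>
definition shifted_image :: "('k::field \<Rightarrow> 'v::ab_group_add \<Rightarrow> 'v) \<Rightarrow> ('v \<Rightarrow> 'v) \<Rightarrow> 'k \<Rightarrow> 'v set \<Rightarrow> 'v set" where
  "shifted_image scale M c U = (\<lambda>u. M u - scale c u) ` U"

end

theory Submission
  imports Defs
begin


definition lnr :: "('k \<Rightarrow> 'v::plus \<Rightarrow> 'v) \<Rightarrow> ('v \<Rightarrow> 'v) \<Rightarrow> bool" where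
  "lnr sc f \<longleftrightarrow> (\<forall>x y. f (x + y) = f x + f y) \<and> (\<forall>c x. f (sc c x) = sc c (f x))"

context vector_space begin

lemma lnr_linear: "Vector_Spaces.linear scale scale f \<Longrightarrow> lnr scale f"
  unfolding lnr_def Vector_Spaces.linear_iff by auto

lemma lnrD: assumes "lnr scale f" shows "f (x + y) = f x + f y" "f (c *s x) = c *s f x"
  "f 0 = 0" "f (x - y) = f x - f y"
proof -
  show a: "f (x + y) = f x + f y" "f (c *s x) = c *s f x" using assms by (auto simp: lnr_def)
  have "f 0 = f (0 *s 0)" by simp
  also have "\<dots> = 0" using assms unfolding lnr_def by (metis scale_zero_left)
  finally show "f 0 = 0" .
  have "f x = f (x - y) + f y" using assms unfolding lnr_def by (metis diff_add_cancel)
  then show "f (x - y) = f x - f y" by (simp add: algebra_simps)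
qed

lemma lnr_shift: "lnr scale f \<Longrightarrow> lnr scale (\<lambda>x. f x - c *s x)"
  unfolding lnr_def by (auto simp: algebra_simps scale_left_commute)

lemma lnr_comp: "lnr scale f \<Longrightarrow> lnr scale g \<Longrightarrow> lnr scale (\<lambda>x. f (g x))"
  unfolding lnr_def by auto

lemma lnr_sub_eq: assumes "lnr scale f" "lnr scale g" shows "subspace {v. f v = g v}"
  using assms by (auto intro!: subspaceI simp: lnrD)

lemma eig_subspace: "lnr scale f \<Longrightarrow> subspace {v. f v = c *s v}"
  by (rule lnr_sub_eq) (auto simp: lnr_def algebra_simps scale_left_commute)

lemma span_img: assumes "lnr scale f" "f ` A \<subseteq> S" "subspace S" shows "f ` span A \<subseteq> S"
proof -
  have "subspace {x. f x \<in> S}" using assms by (auto intro!: subspaceI simp: lnrD subspace_0 subspace_add subspace_scale)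
  moreover have "A \<subseteq> {x. f x \<in> S}" using assms by auto
  ultimately have "span A \<subseteq> {x. f x \<in> S}" by (metis span_minimal)
  then show ?thesis by auto
qed

lemma span_img2: assumes "lnr scale f" "\<And>j y. j \<in> I \<Longrightarrow> y \<in> Z j \<Longrightarrow> f y \<in> S" "subspace S"
  "u \<in> span (\<Union>(Z ` I))" shows "f u \<in> S"
  using span_img[OF assms(1) _ assms(3), of "\<Union>(Z ` I)"] assms(2,4) by blast

lemma span_sub2: assumes "\<And>j y. j \<in> I \<Longrightarrow> y \<in> Z j \<Longrightarrow> y \<in> S" "subspace S"
  "u \<in> span (\<Union>(Z ` I))" shows "u \<in> S"
  using span_minimal[of "\<Union>(Z ` I)" S] assms by blast

lemma ssum_span: assumes "finite I" "\<And>i. i \<in> I \<Longrightarrow> subspace (U i)"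
  shows "ssum U I = span (\<Union>(U ` I))"
proof
  show "ssum U I \<subseteq> span (\<Union>(U ` I))"
  proof
    fix x assume "x \<in> ssum U I"
    then obtain f where x: "x = sum f I" and f: "\<forall>i\<in>I. f i \<in> U i" unfolding ssum_def by auto
    have "\<And>i. i \<in> I \<Longrightarrow> f i \<in> span (\<Union>(U ` I))" using f by (auto intro: span_base)
    then show "x \<in> span (\<Union>(U ` I))" unfolding x by (simp add: span_sum)
  qed
  have "subspace (ssum U I)"
  proof (rule subspaceI)
    show "0 \<in> ssum U I" unfolding ssum_def
      by (rule CollectI, rule exI[of _ "\<lambda>_. 0"]) (auto intro: subspace_0 assms)
    fix x y assume "x \<in> ssum U I" "y \<in> ssum U I"
    then obtain f g where "x = sum f I" "\<forall>i\<in>I. f i \<in> U i" "y = sum g I" "\<forall>i\<in>I. g i \<in> U i"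
      unfolding ssum_def by auto
    then show "x + y \<in> ssum U I" unfolding ssum_def
      by (intro CollectI exI[of _ "\<lambda>i. f i + g i"]) (auto simp: sum.distrib intro: subspace_add assms)
  next
    fix c x assume "x \<in> ssum U I"
    then obtain f where "x = sum f I" "\<forall>i\<in>I. f i \<in> U i"
      unfolding ssum_def by auto
    then show "c *s x \<in> ssum U I" unfolding ssum_def
      by (intro CollectI exI[of _ "\<lambda>i. c *s f i"]) (auto simp: scale_sum_right intro: subspace_scale assms)
  qed
  moreover have "\<Union>(U ` I) \<subseteq> ssum U I"
  proof
    fix x assume "x \<in> \<Union>(U ` I)"
    then obtain i where i: "i \<in> I" "x \<in> U i" by auto
    show "x \<in> ssum U I" unfolding ssum_def
    proof (intro CollectI exI[of _ "\<lambda>j. if j = i then x else 0"] conjI)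
      show "x = (\<Sum>j\<in>I. if j = i then x else 0)" using i assms(1) by simp
      show "\<forall>j\<in>I. (if j = i then x else 0) \<in> U j" using i by (auto intro: subspace_0 assms)
    qed
  qed
  ultimately show "span (\<Union>(U ` I)) \<subseteq> ssum U I" by (rule span_minimal[rotated])
qed

lemma span_subspace_eq: "subspace S \<Longrightarrow> span S = S" by simp

lemma ext_subspace: "(\<And>j. j \<le> d \<Longrightarrow> subspace (U j)) \<Longrightarrow> subspace (ext d U k)"
  unfolding ext_def by auto

lemma ext_span: assumes "\<And>j. j \<le> d \<Longrightarrow> subspace (U j)" "finite J"
  shows "ssum (ext d U) J = span (\<Union>(U ` {n. n \<le> d \<and> int n \<in> J}))"
proof -
  have "ssum (ext d U) J = span (\<Union>(ext d U ` J))"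
    by (rule ssum_span) (auto intro: ext_subspace assms)
  also have "\<dots> = span (\<Union>(U ` {n. n \<le> d \<and> int n \<in> J}))"
  proof (rule antisym)
    show "span (\<Union>(ext d U ` J)) \<subseteq> span (\<Union>(U ` {n. n \<le> d \<and> int n \<in> J}))"
    proof (rule span_minimal, clarify)
      fix x j assume "j \<in> J" "x \<in> ext d U j"
      then show "x \<in> span (\<Union>(U ` {n. n \<le> d \<and> int n \<in> J}))"
        unfolding ext_def
      proof (cases "0 \<le> j \<and> j \<le> int d")
        case True
        then show ?thesis using \<open>j \<in> J\<close> \<open>x \<in> ext d U j\<close> unfolding ext_def
          by (intro span_base UN_I[of "nat j"]) auto
      qed (auto intro!: span_zero)
    qed simp
    show "span (\<Union>(U ` {n. n \<le> d \<and> int n \<in> J})) \<subseteq> span (\<Union>(ext d U ` J))"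
    proof (rule span_mono, clarify)
      fix x n assume "n \<le> d" "int n \<in> J" "x \<in> U n"
      then show "x \<in> \<Union>(ext d U ` J)" unfolding ext_def by (intro UN_I[of "int n"]) auto
    qed
  qed
  finally show ?thesis .
qed

lemma ext_sub: assumes "0 \<le> k \<and> k \<le> int d \<Longrightarrow> nat k \<in> J" "x \<in> ext d Z k"
  shows "x \<in> span (\<Union>(Z ` J))"
  using assms unfolding ext_def by (cases "0 \<le> k \<and> k \<le> int d") (auto intro: span_base span_zero)

lemma pat: assumes "f y - c' *s y \<in> S" "c' = c \<or> y \<in> S" "subspace S"
  shows "f y - c *s y \<in> S"
proof -
  have e: "f y - c *s y = (f y - c' *s y) + (c' - c) *s y" by (simp add: algebra_simps)
  have "(c' - c) *s y \<in> S" using assms(2,3) by (auto intro: subspace_scale subspace_0)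
  then show ?thesis unfolding e using assms(1,3) by (blast intro: subspace_add)
qed

end


definition adj :: "nat \<Rightarrow> nat \<Rightarrow> nat set" where
  "adj d j = {n. n \<le> d \<and> int n \<in> {int j - 1..int j + 1}}"

locale tdset = vector_space +
  fixes P Ps :: "'b \<Rightarrow> 'b" and d :: nat and X Y :: "nat \<Rightarrow> 'b set" and th ths :: "nat \<Rightarrow> 'a"
  assumes linP: "lnr scale P" and linPs: "lnr scale Ps"
  and Yeq: "\<And>j. j \<le> d \<Longrightarrow> Y j = {v. P v = th j *s v}"
  and Xeq: "\<And>j. j \<le> d \<Longrightarrow> X j = {v. Ps v = ths j *s v}"
  and thinj: "inj_on th {..d}"
  and X0: "X 0 \<noteq> {0}" and Yd: "Y d \<noteq> {0}"
  and Yspan: "span (\<Union>(Y ` {..d})) = UNIV"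
  and PX: "\<And>j. j \<le> d \<Longrightarrow> P ` X j \<subseteq> span (\<Union>(X ` adj d j))"
  and PsY: "\<And>j. j \<le> d \<Longrightarrow> Ps ` Y j \<subseteq> span (\<Union>(Y ` adj d j))"
  and irr: "\<And>W. subspace W \<Longrightarrow> P ` W \<subseteq> W \<Longrightarrow> Ps ` W \<subseteq> W \<Longrightarrow> W = {0} \<or> W = UNIV"
begin

definition FF where "FF i = span (\<Union>(X ` {..i}))"
definition GG where "GG i = span (\<Union>(Y ` {..i}))"
definition UU where "UU i = FF i \<inter> GG (d - i)"

lemma Ysub: "j \<le> d \<Longrightarrow> subspace (Y j)"
  using Yeq eig_subspace[OF linP] by simp
lemma Xsub: "j \<le> d \<Longrightarrow> subspace (X j)"
  using Xeq eig_subspace[OF linPs] by simp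

lemma FF_sub[simp]: "subspace (FF i)" by (simp add: FF_def)
lemma GG_sub[simp]: "subspace (GG i)" by (simp add: GG_def)
lemma UU_sub[simp]: "subspace (UU i)" by (simp add: UU_def subspace_inter)

lemma Y_le: "j \<le> m \<Longrightarrow> y \<in> Y j \<Longrightarrow> y \<in> GG m"
  unfolding GG_def by (auto intro!: span_base)
lemma X_le: "j \<le> m \<Longrightarrow> y \<in> X j \<Longrightarrow> y \<in> FF m"
  unfolding FF_def by (auto intro!: span_base)
lemma GG_mono: assumes "m \<le> m'" "u \<in> GG m" shows "u \<in> GG m'"
proof -
  have "\<Union>(Y ` {..m}) \<subseteq> \<Union>(Y ` {..m'})" using assms by (intro UN_mono) auto
  then show ?thesis using assms unfolding GG_def by (meson span_mono subsetD)
qed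
lemma FF_mono: assumes "m \<le> m'" "u \<in> FF m" shows "u \<in> FF m'"
proof -
  have "\<Union>(X ` {..m}) \<subseteq> \<Union>(X ` {..m'})" using assms by (intro UN_mono) auto
  then show ?thesis using assms unfolding FF_def by (meson span_mono subsetD)
qed

lemma lowerY: assumes "m \<le> d" "u \<in> GG m"
  shows "P u - th m *s u \<in> span (\<Union>(Y ` {..<m}))"
proof (rule span_img2[OF lnr_shift[OF linP], of "{..m}" Y])
  fix j y assume j: "j \<in> {..m}" and y: "y \<in> Y j"
  then have "P y = th j *s y" using Yeq assms(1) by auto
  then have e: "P y - th m *s y = (th j - th m) *s y" by (simp add: algebra_simps)
  show "P y - th m *s y \<in> span (\<Union>(Y ` {..<m}))"
  proof (cases "j = m")
    case True then show ?thesis using e by (simp add: span_zero)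
  next
    case False
    then have "y \<in> span (\<Union>(Y ` {..<m}))" using j y by (intro span_base UN_I[of j]) auto
    then show ?thesis using e by (simp add: span_scale)
  qed
qed (use assms GG_def in auto)

lemma lowerX: assumes "m \<le> d" "u \<in> FF m"
  shows "Ps u - ths m *s u \<in> span (\<Union>(X ` {..<m}))"
proof (rule span_img2[OF lnr_shift[OF linPs], of "{..m}" X])
  fix j y assume j: "j \<in> {..m}" and y: "y \<in> X j"
  then have "Ps y = ths j *s y" using Xeq assms(1) by auto
  then have e: "Ps y - ths m *s y = (ths j - ths m) *s y" by (simp add: algebra_simps)
  show "Ps y - ths m *s y \<in> span (\<Union>(X ` {..<m}))"
  proof (cases "j = m")
    case True then show ?thesis using e by (simp add: span_zero)
  next
    case False
    then have "y \<in> span (\<Union>(X ` {..<m}))" using j y by (intro span_base UN_I[of j]) auto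
    then show ?thesis using e by (simp add: span_scale)
  qed
qed (use assms FF_def in auto)

lemma lessThan_eq: "0 < (m::nat) \<Longrightarrow> {..<m} = {..m - 1}"
proof -
  assume "0 < m" then obtain k where "m = Suc k" by (cases m) auto
  then show ?thesis by (simp add: lessThan_Suc_atMost)
qed

lemma PF: assumes "i \<le> d" "u \<in> FF i" shows "P u \<in> FF (min (i+1) d)"
proof (rule span_img2[OF linP, of "{..i}" X])
  fix j y assume j: "j \<in> {..i}" and y: "y \<in> X j"
  have "P y \<in> span (\<Union>(X ` adj d j))" using PX[of j] j y assms by auto
  moreover have "adj d j \<subseteq> {..min (i+1) d}" using j by (auto simp: adj_def)
  ultimately show "P y \<in> FF (min (i+1) d)" unfolding FF_def
    by (meson UN_mono order_refl span_mono subsetD image_mono)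
qed (use assms FF_def in auto)

lemma PsG: assumes "i \<le> d" "u \<in> GG i" shows "Ps u \<in> GG (min (i+1) d)"
proof (rule span_img2[OF linPs, of "{..i}" Y])
  fix j y assume j: "j \<in> {..i}" and y: "y \<in> Y j"
  have "Ps y \<in> span (\<Union>(Y ` adj d j))" using PsY[of j] j y assms by auto
  moreover have "adj d j \<subseteq> {..min (i+1) d}" using j by (auto simp: adj_def)
  ultimately show "Ps y \<in> GG (min (i+1) d)" unfolding GG_def
    by (meson UN_mono order_refl span_mono subsetD image_mono)
qed (use assms GG_def in auto)

lemma raise: assumes "i \<le> d" "u \<in> UU i"
  shows "P u - th (d-i) *s u \<in> (if i < d then UU (i+1) else {0})"
proof -
  have g: "P u - th (d-i) *s u \<in> span (\<Union>(Y ` {..<d-i}))"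
    using lowerY[of "d-i" u] assms by (auto simp: UU_def)
  show ?thesis
  proof (cases "i < d")
    case True
    have "P u \<in> FF (i+1)" using PF[of i u] assms True by (auto simp: UU_def min_def split: if_splits)
    moreover have "u \<in> FF (i+1)" using assms FF_mono[of i "i+1" u] by (auto simp: UU_def)
    ultimately have "P u - th (d-i) *s u \<in> FF (i+1)" by (blast intro: subspace_diff[OF FF_sub] subspace_scale[OF FF_sub])
    moreover have "P u - th (d-i) *s u \<in> GG (d - (i+1))"
      using g True lessThan_eq[of "d-i"] by (simp add: GG_def)
    ultimately show ?thesis using True by (simp add: UU_def)
  next
    case False then show ?thesis using g by simp
  qed
qed

lemma lower: assumes "i \<le> d" "u \<in> UU i"
  shows "Ps u - ths i *s u \<in> (if 0 < i then UU (i-1) else {0})"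
proof -
  have g: "Ps u - ths i *s u \<in> span (\<Union>(X ` {..<i}))"
    using lowerX[of i u] assms by (auto simp: UU_def)
  show ?thesis
  proof (cases "0 < i")
    case True
    have eq: "d - (i - 1) = Suc (d - i)" using assms True by arith
    have "Ps u \<in> GG (d - (i - 1))" unfolding eq using PsG[of "d-i" u] assms True
      by (auto simp: UU_def min_def split: if_splits)
    moreover have "u \<in> GG (d - (i - 1))" using assms GG_mono[of "d-i" "d - (i - 1)" u] by (auto simp: UU_def)
    ultimately have "Ps u - ths i *s u \<in> GG (d - (i - 1))" by (blast intro: subspace_diff[OF GG_sub] subspace_scale[OF GG_sub])
    moreover have "Ps u - ths i *s u \<in> FF (i - 1)"
      using g True lessThan_eq[of i] by (simp add: FF_def)
    ultimately show ?thesis using True by (simp add: UU_def)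
  next
    case False then show ?thesis using g by simp
  qed
qed


lemma GG_d: "GG d = UNIV" using Yspan by (simp add: GG_def)

lemma span_all: "span (\<Union>(UU ` {..d})) = UNIV"
proof -
  let ?W = "span (\<Union>(UU ` {..d}))"
  have UW: "\<And>i u. i \<le> d \<Longrightarrow> u \<in> UU i \<Longrightarrow> u \<in> ?W"
    by (intro span_base UN_I) auto
  have "P ` ?W \<subseteq> ?W"
  proof (rule span_img[OF linP _ subspace_span])
    show "P ` (\<Union>(UU ` {..d})) \<subseteq> ?W"
    proof (rule image_subsetI, elim UN_E)
    fix u i assume i: "i \<in> {..d}" and u: "u \<in> UU i"
    have r: "P u - th (d-i) *s u \<in> ?W"
      using raise[of i u] i u UW[of "i+1"] by (auto split: if_splits intro: span_zero)
    have "P u = (P u - th (d-i) *s u) + th (d-i) *s u" by simp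
    then show "P u \<in> ?W" using r UW[of i u] i u by (metis atMost_iff span_add span_scale)
  qed
  qed
  moreover have "Ps ` ?W \<subseteq> ?W"
  proof (rule span_img[OF linPs _ subspace_span])
    show "Ps ` (\<Union>(UU ` {..d})) \<subseteq> ?W"
    proof (rule image_subsetI, elim UN_E)
    fix u i assume i: "i \<in> {..d}" and u: "u \<in> UU i"
    have r: "Ps u - ths i *s u \<in> ?W"
      using lower[of i u] i u UW[of "i-1"] by (auto split: if_splits intro: span_zero)
    have "Ps u = (Ps u - ths i *s u) + ths i *s u" by simp
    then show "Ps u \<in> ?W" using r UW[of i u] i u by (metis atMost_iff span_add span_scale)
  qed
  qed
  moreover have "?W \<noteq> {0}"
  proof
    assume W0: "?W = {0}"
    obtain x where x: "x \<in> X 0" "x \<noteq> 0" using X0 Xsub[of 0] subspace_0 by blast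
    have "x \<in> FF 0" using X_le[of 0 0 x] x by simp
    then have "x \<in> UU 0" using GG_d by (simp add: UU_def)
    then show False using UW[of 0 x] W0 x by simp
  qed
  ultimately show ?thesis using irr[of ?W] by auto
qed

lemma eig_indep: assumes "finite S" "S \<subseteq> {..d}" "mu \<notin> th ` S" "P z = mu *s z"
  "z \<in> span (\<Union>(Y ` S))" shows "z = 0"
  using assms
proof (induction S arbitrary: z rule: finite_induct)
  case empty then show ?case by simp
next
  case (insert s S)
  have sd: "s \<le> d" using insert by auto
  have "span (\<Union>(Y ` insert s S)) = span (Y s \<union> \<Union>(Y ` S))" by simp
  then obtain a b where ab: "z = a + b" "a \<in> span (Y s)" "b \<in> span (\<Union>(Y ` S))"
    using insert(7) span_Un by auto
  have "a \<in> Y s" using ab(2) span_eq_iff[THEN iffD2, OF Ysub[OF sd]] by simp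
  then have a: "P a = th s *s a" using Yeq[OF sd] by blast
  let ?f = "\<lambda>x. P x - th s *s x"
  have fb: "?f b \<in> span (\<Union>(Y ` S))"
  proof (rule span_img2[OF lnr_shift[OF linP] _ subspace_span ab(3)])
    fix j y assume j: "j \<in> S" and y: "y \<in> Y j"
    then have jd: "j \<le> d" using insert by auto
    have "P y = th j *s y" using y Yeq[OF jd] by simp
    then have "?f y = (th j - th s) *s y" by (simp add: algebra_simps)
    moreover have "y \<in> span (\<Union>(Y ` S))" using j y by (intro span_base UN_I) auto
    ultimately show "?f y \<in> span (\<Union>(Y ` S))" by (simp add: span_scale)
  qed
  have "?f z = ?f a + ?f b" using linP by (simp add: ab(1) lnrD algebra_simps)
  also have "?f a = 0" using a by simp
  finally have fz: "?f z = ?f b" by simp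
  have "?f z = (mu - th s) *s z" using insert(6) by (simp add: algebra_simps)
  then have 1: "(mu - th s) *s z \<in> span (\<Union>(Y ` S))" using fz fb by simp
  have 2: "P ((mu - th s) *s z) = mu *s ((mu - th s) *s z)"
    using insert(6) linP by (simp add: lnrD scale_left_commute)
  have "(mu - th s) *s z = 0" using insert.IH[OF _ _ 2 1] insert by auto
  moreover have "mu \<noteq> th s" using insert by auto
  ultimately show ?case by simp
qed

definition ZZ where "ZZ k = FF k \<inter> GG (d - k - 1)"

lemma zero: assumes "k < d" shows "FF k \<inter> GG (d - k - 1) = {0}"
proof -
  let ?W = "span (\<Union>(ZZ ` {..<d}))"
  have ZW: "\<And>i u. i < d \<Longrightarrow> u \<in> ZZ i \<Longrightarrow> u \<in> ?W"
    by (intro span_base UN_I) auto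
  have "P ` ?W \<subseteq> ?W"
  proof (rule span_img[OF linP _ subspace_span])
    show "P ` (\<Union>(ZZ ` {..<d})) \<subseteq> ?W"
    proof (rule image_subsetI, elim UN_E)
    fix u i assume i: "i \<in> {..<d}" and u: "u \<in> ZZ i"
    have g: "P u - th (d-i-1) *s u \<in> span (\<Union>(Y ` {..<d-i-1}))"
      using lowerY[of "d-i-1" u] u i by (auto simp: ZZ_def)
    have r: "P u - th (d-i-1) *s u \<in> ?W"
    proof (cases "i + 1 < d")
      case True
      have "P u \<in> FF (i+1)" using PF[of i u] i u True by (auto simp: ZZ_def min_def split: if_splits)
      moreover have "u \<in> FF (i+1)" using u FF_mono[of i "i+1" u] by (auto simp: ZZ_def)
      ultimately have "P u - th (d-i-1) *s u \<in> FF (i+1)"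
        by (blast intro: subspace_diff[OF FF_sub] subspace_scale[OF FF_sub])
      moreover have "P u - th (d-i-1) *s u \<in> GG (d - (i+1) - 1)"
        using g True lessThan_eq[of "d-i-1"] by (simp add: GG_def)
      ultimately show ?thesis using ZW[of "i+1"] True by (simp add: ZZ_def)
    next
      case False
      then have "d - i - 1 = 0" by simp
      then show ?thesis using g by (simp add: span_zero)
    qed
    have "P u = (P u - th (d-i-1) *s u) + th (d-i-1) *s u" by simp
    then show "P u \<in> ?W" using r ZW[of i u] i u by (metis lessThan_iff span_add span_scale)
  qed
  qed
  moreover have "Ps ` ?W \<subseteq> ?W"
  proof (rule span_img[OF linPs _ subspace_span])
    show "Ps ` (\<Union>(ZZ ` {..<d})) \<subseteq> ?W"
    proof (rule image_subsetI, elim UN_E)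
    fix u i assume i: "i \<in> {..<d}" and u: "u \<in> ZZ i"
    have g: "Ps u - ths i *s u \<in> span (\<Union>(X ` {..<i}))"
      using lowerX[of i u] u i by (auto simp: ZZ_def)
    have r: "Ps u - ths i *s u \<in> ?W"
    proof (cases "0 < i")
      case True
      have eq: "d - (i - 1) - 1 = d - i" using True i by simp
      have eq2: "min (d - i - 1 + 1) d = d - i" using i True by auto
      have "Ps u \<in> GG (d - i)" using PsG[of "d-i-1" u] i u eq2 by (auto simp: ZZ_def)
      moreover have "u \<in> GG (d - i)" using u GG_mono[of "d-i-1" "d-i" u] by (auto simp: ZZ_def)
      ultimately have "Ps u - ths i *s u \<in> GG (d - i)"
        by (blast intro: subspace_diff[OF GG_sub] subspace_scale[OF GG_sub])
      moreover have "Ps u - ths i *s u \<in> FF (i - 1)"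
        using g True lessThan_eq[of i] by (simp add: FF_def)
      ultimately show ?thesis using ZW[of "i-1"] True i eq by (simp add: ZZ_def)
    next
      case False
      then show ?thesis using g by (simp add: span_zero)
    qed
    have "Ps u = (Ps u - ths i *s u) + ths i *s u" by simp
    then show "Ps u \<in> ?W" using r ZW[of i u] i u by (metis lessThan_iff span_add span_scale)
  qed
  qed
  moreover have "?W \<noteq> UNIV"
  proof
    assume WU: "?W = UNIV"
    obtain z where z: "z \<in> Y d" "z \<noteq> 0" using Yd Ysub[of d] subspace_0 by blast
    have "?W \<subseteq> span (\<Union>(Y ` {..<d}))"
    proof (rule span_minimal[OF _ subspace_span], rule subsetI, elim UN_E)
      fix u i assume "i \<in> {..<d}" "u \<in> ZZ i"
      then have "u \<in> GG (d - i - 1)" "d - i - 1 \<le> d - 1" "0 < d" by (auto simp: ZZ_def)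
      then have "u \<in> GG (d - 1)" using GG_mono by blast
      then show "u \<in> span (\<Union>(Y ` {..<d}))" using lessThan_eq[of d] \<open>0 < d\<close> by (simp add: GG_def)
    qed
    then have "z \<in> span (\<Union>(Y ` {..<d}))" using WU by auto
    moreover have "th d \<notin> th ` {..<d}"
    proof
      assume "th d \<in> th ` {..<d}"
      then obtain x where "x < d" "th d = th x" by auto
      then show False using thinj unfolding inj_on_def by (metis atMost_iff less_imp_le_nat less_irrefl order_refl)
    qed
    moreover have "P z = th d *s z" using z Yeq[of d] by simp
    ultimately have "z = 0" by (intro eig_indep[of "{..<d}" "th d"]) auto
    then show False using z by simp
  qed
  ultimately have W0: "?W = {0}" using irr[of ?W] by auto
  have "ZZ k \<subseteq> ?W" using ZW assms by blast
  then have "ZZ k \<subseteq> {0}" using W0 by simp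
  moreover have "0 \<in> ZZ k" by (simp add: ZZ_def span_zero FF_def GG_def)
  ultimately show ?thesis by (auto simp: ZZ_def)
qed


lemma UU_FF: "u \<in> UU j \<Longrightarrow> j \<le> k \<Longrightarrow> u \<in> FF k"
  unfolding UU_def using FF_mono by blast
lemma UU_GG: "u \<in> UU j \<Longrightarrow> d - j \<le> m \<Longrightarrow> u \<in> GG m"
  unfolding UU_def using GG_mono by blast

lemma fsum: assumes "k \<le> d" "x \<in> FF k" shows "x \<in> span (\<Union>(UU ` {..k}))"
proof -
  have "{..d} = {..k} \<union> {k<..d}" using assms by auto
  then have "x \<in> span (\<Union>(UU ` {..k}) \<union> \<Union>(UU ` {k<..d}))" using span_all by (metis UN_Un UNIV_I)
  then obtain a b where ab: "x = a + b" "a \<in> span (\<Union>(UU ` {..k}))" "b \<in> span (\<Union>(UU ` {k<..d}))"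
    using span_Un by auto
  show ?thesis
  proof (cases "k < d")
    case True
    have b1: "b \<in> GG (d - k - 1)"
      by (rule span_sub2[OF _ GG_sub ab(3)]) (auto intro: UU_GG)
    have "a \<in> FF k" by (rule span_sub2[OF _ FF_sub ab(2)]) (auto intro: UU_FF)
    then have "b \<in> FF k" using ab(1) assms(2) by (metis FF_sub add_diff_cancel_left' subspace_diff)
    then have "b = 0" using zero[OF True] b1 by auto
    then show ?thesis using ab by simp
  next
    case False
    then have "{k<..d} = {}" by auto
    then show ?thesis using ab by simp
  qed
qed

lemma tri: assumes "i \<le> d" "x \<in> FF (min (i+1) d)" "x \<in> GG (min (d-i+1) d)"
  shows "x \<in> span (\<Union>(UU ` adj d i))"
proof -
  have x: "x \<in> span (\<Union>(UU ` {..min (i+1) d}))" using fsum[OF _ assms(2)] by simp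
  have "{..min (i+1) d} = {j. j+1 < i} \<union> adj d i" using assms(1) by (auto simp: adj_def)
  then have "x \<in> span (\<Union>(UU ` {j. j+1 < i}) \<union> \<Union>(UU ` adj d i))" using x by (metis UN_Un)
  then obtain y z where yz: "x = y + z" "y \<in> span (\<Union>(UU ` {j. j+1 < i}))" "z \<in> span (\<Union>(UU ` adj d i))"
    using span_Un by auto
  have "z \<in> GG (min (d-i+1) d)"
    by (rule span_sub2[OF _ GG_sub yz(3)]) (auto intro: UU_GG simp: adj_def)
  then have yG: "y \<in> GG (min (d-i+1) d)" using yz(1) assms(3) by (metis GG_sub add_diff_cancel_right' subspace_diff)
  have "y = 0"
  proof (cases "2 \<le> i")
    case True
    have "y \<in> FF (i - 2)"
      by (rule span_sub2[OF _ FF_sub yz(2)]) (auto intro: UU_FF)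
    moreover have "min (d-i+1) d = d - (i - 2) - 1" using True assms by auto
    moreover have "i - 2 < d" using True assms by auto
    ultimately show ?thesis using zero[of "i-2"] yG by (metis IntI singletonD)
  next
    case False
    then have "{j. j+1 < i} = {}" by auto
    then show ?thesis using yz by simp
  qed
  then show ?thesis using yz by simp
qed

end


context vector_space begin

lemma lnr_comm: "lnr scale M \<Longrightarrow> lnr scale N \<Longrightarrow> lnr scale (\<lambda>v. c1 *s M (N v) - c2 *s N (M v))"
  unfolding lnr_def by (auto simp: algebra_simps scale_left_commute)
lemma lnr_scal: "lnr scale (\<lambda>v. c *s v)"
  unfolding lnr_def by (auto simp: algebra_simps scale_left_commute)

lemma shape1: assumes "lnr scale M" "lnr scale N" "N v = \<beta> *s v" "M v = \<alpha> *s v + r" "N r = \<gamma> *s r"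
  shows "q *s M (N v) - qi *s N (M v) = ((q - qi) * \<alpha> * \<beta>) *s v + (q * \<beta> - qi * \<gamma>) *s r"
  using assms by (simp add: lnrD algebra_simps)

lemma shape2: assumes "lnr scale M" "lnr scale N" "N v = \<beta> *s v" "M v = \<alpha> *s v + r" "N r = \<gamma> *s r"
  shows "q *s N (M v) - qi *s M (N v) = ((q - qi) * \<alpha> * \<beta>) *s v + (q * \<gamma> - qi * \<beta>) *s r"
  using assms by (simp add: lnrD algebra_simps)

lemma step: assumes "f y - c' *s y \<in> ext d Z k" "0 \<le> k \<and> k \<le> int d \<Longrightarrow> nat k \<in> J"
  "c' = c \<or> j \<in> J" "y \<in> Z j"
  shows "f y - c *s y \<in> span (\<Union>(Z ` J))"
proof (rule pat[OF _ _ subspace_span])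
  show "f y - c' *s y \<in> span (\<Union>(Z ` J))" using ext_sub[OF assms(2) assms(1)] by blast
  show "c' = c \<or> y \<in> span (\<Union>(Z ` J))" using assms(3,4) by (auto intro: span_base)
qed

lemma step2: assumes "f y - c' *s y \<in> ext d Z k" "0 \<le> k \<and> k \<le> int d \<Longrightarrow> nat k \<in> J"
  "j = jz \<Longrightarrow> c' = c" "j \<noteq> jz \<Longrightarrow> j \<in> J" "y \<in> Z j"
  shows "f y - c *s y \<in> span (\<Union>(Z ` J))"
  by (rule step[where f=f and y=y and c'=c' and Z=Z and k=k and J=J and c=c and j=j]) (use assms in blast)+

lemma step1: assumes "f y - c' *s y \<in> ext d Z k" "0 \<le> k \<and> k \<le> int d \<Longrightarrow> nat k \<in> J"
  "j \<in> J" "y \<in> Z j"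
  shows "f y - c *s y \<in> span (\<Union>(Z ` J))"
  by (rule step[where f=f and y=y and c'=c' and Z=Z and k=k and J=J and c=c and j=j]) (use assms in blast)+

lemma step0: assumes "f y - c' *s y \<in> ext d Z k" "0 \<le> k \<and> k \<le> int d \<Longrightarrow> nat k \<in> J"
  "j \<in> J" "y \<in> Z j"
  shows "f y \<in> span (\<Union>(Z ` J))"
  using step1[where f=f and y=y and c'=c' and Z=Z and k=k and J=J and c=0 and j=j] assms by simp

lemma two: assumes "lnr scale f" "u \<in> span (\<Union>(Za ` Ia))" "u \<in> span (\<Union>(Zb ` Ib))"
  "\<And>j y. j \<in> Ia \<Longrightarrow> y \<in> Za j \<Longrightarrow> f y \<in> span (\<Union>(Za ` Ja))"
  "\<And>j y. j \<in> Ib \<Longrightarrow> y \<in> Zb j \<Longrightarrow> f y \<in> span (\<Union>(Zb ` Jb))"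
  shows "f u \<in> span (\<Union>(Za ` Ja)) \<inter> span (\<Union>(Zb ` Jb))"
proof -
  have "f u \<in> span (\<Union>(Za ` Ja))"
    by (rule span_img2[where f=f and I=Ia and Z=Za and S="span (\<Union>(Za ` Ja))"]) (use assms in auto)
  moreover have "f u \<in> span (\<Union>(Zb ` Jb))"
    by (rule span_img2[where f=f and I=Ib and Z=Zb and S="span (\<Union>(Zb ` Jb))"]) (use assms in auto)
  ultimately show ?thesis by blast
qed

lemma shift1: assumes "lnr scale M" "lnr scale N" "\<And>v. q *s M (N v) - inverse q *s N (M v) = c *s v"
  "M y = \<theta> *s y" "c = (q - inverse q) * \<theta> * \<beta>" "q \<noteq> 0"
  shows "M (N y - \<beta> *s y) = (inverse q * inverse q * \<theta>) *s (N y - \<beta> *s y)"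
proof -
  have "q *s M (N y) - inverse q *s N (\<theta> *s y) = c *s y" using assms(3)[of y] assms(4) by simp
  then have "q *s M (N y) = (inverse q * \<theta>) *s N y + c *s y" using assms(2) by (simp add: lnrD algebra_simps)
  then have "inverse q *s (q *s M (N y)) = inverse q *s ((inverse q * \<theta>) *s N y + c *s y)" by simp
  then have h: "M (N y) = (inverse q * inverse q * \<theta>) *s N y + (inverse q * c) *s y"
    using assms(6) by (simp add: scale_right_distrib mult.assoc)
  have c: "inverse q * c = \<beta> * \<theta> - (inverse q * inverse q * \<theta> * \<beta>)"
    using assms(5,6) by (simp add: field_simps)
  have "M (N y - \<beta> *s y) = M (N y) - (\<beta> * \<theta>) *s y" using assms(1,4) by (simp add: lnrD)
  also have "\<dots> = (inverse q * inverse q * \<theta>) *s N y - (inverse q * inverse q * \<theta> * \<beta>) *s y"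
    unfolding h c by (simp add: algebra_simps)
  also have "\<dots> = (inverse q * inverse q * \<theta>) *s (N y - \<beta> *s y)" by (simp add: algebra_simps)
  finally show ?thesis .
qed

lemma shift2: assumes "lnr scale M" "lnr scale N" "\<And>v. q *s N (M v) - inverse q *s M (N v) = c *s v"
  "M y = \<theta> *s y" "c = (q - inverse q) * \<theta> * \<beta>" "q \<noteq> 0"
  shows "M (N y - \<beta> *s y) = (q * q * \<theta>) *s (N y - \<beta> *s y)"
proof -
  have "q *s N (\<theta> *s y) - inverse q *s M (N y) = c *s y" using assms(3)[of y] assms(4) by simp
  then have "inverse q *s M (N y) = (q * \<theta>) *s N y - c *s y" using assms(2) by (simp add: lnrD algebra_simps)
  then have "q *s (inverse q *s M (N y)) = q *s ((q * \<theta>) *s N y - c *s y)" by simp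
  then have h: "M (N y) = (q * q * \<theta>) *s N y - (q * c) *s y"
    using assms(6) by (simp add: scale_right_diff_distrib mult.assoc)
  have c: "q * c + \<beta> * \<theta> = q * q * \<theta> * \<beta>"
    using assms(5,6) by (simp add: field_simps)
  have "M (N y - \<beta> *s y) = M (N y) - (\<beta> * \<theta>) *s y" using assms(1,4) by (simp add: lnrD)
  also have "\<dots> = (q * q * \<theta>) *s N y - (q * c + \<beta> * \<theta>) *s y"
    unfolding h by (simp add: algebra_simps)
  also have "\<dots> = (q * q * \<theta>) *s (N y - \<beta> *s y)" unfolding c by (simp add: algebra_simps)
  finally show ?thesis .
qed

end

lemma powi_inj: fixes q :: "'k::field" assumes "q \<noteq> 0" "not_root_of_unity q" "q powi m = q powi n"
  shows "m = n"
proof (rule ccontr)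
  assume mn: "m \<noteq> n"
  have gen: "\<And>m n. m < n \<Longrightarrow> q powi m = q powi n \<Longrightarrow> False"
  proof -
    fix m n :: int assume lt: "m < n" and e: "q powi m = q powi n"
    have "q powi n = q powi m * q powi (n - m)" using assms(1) by (simp add: power_int_add[symmetric])
    then have "q powi (n - m) = 1" using e assms(1) by (simp add: power_int_eq_0_iff)
    moreover have "q powi (n - m) = q ^ nat (n - m)" using lt by (metis int_nat_eq less_le_not_le power_int_of_nat zle_diff1_eq order_le_less diff_gt_0_iff_gt)
    ultimately have "q ^ nat (n - m) = 1" by simp
    moreover have "0 < nat (n - m)" using lt by simp
    ultimately show False using assms(2) unfolding not_root_of_unity_def by blast
  qed
  show False
  proof (cases "m < n")
    case True then show ?thesis using gen assms(3) by blast
  next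
    case False then have "n < m" using mn by simp
    then show ?thesis using gen assms(3) by metis
  qed
qed



lemma adj_rev: assumes "j \<le> d" shows "adj d (d - j) = (\<lambda>n. d - n) ` adj d j"
proof
  show "adj d (d - j) \<subseteq> (\<lambda>n. d - n) ` adj d j"
  proof
    fix n assume n: "n \<in> adj d (d - j)"
    then have "d - n \<in> adj d j" "n = d - (d - n)" using assms by (auto simp: adj_def)
    then show "n \<in> (\<lambda>n. d - n) ` adj d j" by blast
  qed
  show "(\<lambda>n. d - n) ` adj d j \<subseteq> adj d (d - j)" using assms by (auto simp: adj_def)
qed

lemma rev_atMost: assumes "m \<le> (d::nat)" shows "(\<lambda>j. d - j) ` {..m} = {d - m..d}"
proof
  show "{d - m..d} \<subseteq> (\<lambda>j. d - j) ` {..m}"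
  proof
    fix n assume n: "n \<in> {d - m..d}"
    then have "d - m \<le> n" "n \<le> d" by auto
    then have "d - n \<le> m" using assms by arith
    moreover have "n = d - (d - n)" using \<open>n \<le> d\<close> by arith
    ultimately have "d - n \<in> {..m}" "n = d - (d - n)" by auto
    then show "n \<in> (\<lambda>j. d - j) ` {..m}" by blast
  qed
qed auto

context vector_space begin

lemma main:
  fixes A As B Bs :: "'b \<Rightarrow> 'b"
    and q a as b bs :: 'a
    and d :: nat
  assumes q: "q \<noteq> 0" "not_root_of_unity q"
    and TD: "tridiagonal_pair scale A As"
    and nzs: "a \<noteq> 0" "as \<noteq> 0" "b \<noteq> 0" "bs \<noteq> 0"
    and ordA: "standard_ordering scale A As d (\<lambda>i. a * q powi (2 * int i - int d))"
    and ordAs: "standard_ordering scale As A d (\<lambda>i. as * q powi (int d - 2 * int i))"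
    and V_def: "V = (\<lambda>i. eigsp scale A (a * q powi (2 * int i - int d)))"
    and Vs_def: "Vs = (\<lambda>i. eigsp scale As (as * q powi (int d - 2 * int i)))"
    and B_lin: "Vector_Spaces.linear scale scale B"
    and B_act: "\<And>i u. i \<le> d \<Longrightarrow> u \<in> dec_0s0 d V Vs i \<Longrightarrow> B u = scale (b * q powi (2 * int i - int d)) u"
    and Bs_lin: "Vector_Spaces.linear scale scale Bs"
    and Bs_act: "\<And>i u. i \<le> d \<Longrightarrow> u \<in> dec_DsD d V Vs i \<Longrightarrow> Bs u = scale (bs * q powi (int d - 2 * int i)) u"
  shows "\<forall>i\<le>d.
    (let U = dec_0D d V Vs in
       shifted_image scale B (b * q powi (int d - 2 * int i)) (U i) \<subseteq> ext d U (int i - 1) \<and>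
       shifted_image scale Bs (bs * q powi (int d - 2 * int i)) (U i) \<subseteq> ext d U (int i + 1)) \<and>
    (let U = dec_0sDs d V Vs in
       shifted_image scale B (b * q powi (2 * int i - int d)) (U i) \<subseteq> ext d U (int i - 1) \<and>
       shifted_image scale Bs (bs * q powi (2 * int i - int d)) (U i) \<subseteq> ext d U (int i + 1)) \<and>
    (let U = dec_0sD d V Vs in
       shifted_image scale B (b * q powi (2 * int i - int d)) (U i) \<subseteq> ext d U (int i - 1) \<and>
       shifted_image scale Bs (bs * q powi (int d - 2 * int i)) (U i) \<subseteq> ext d U (int i + 1)) \<and>
    (let U = dec_0s0 d V Vs in
       shifted_image scale B (b * q powi (2 * int i - int d)) (U i) = {0} \<and>
       Bs ` (U i) \<subseteq> ssum (ext d U) {int i - 1 .. int i + 1}) \<and>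
    (let U = dec_Ds0 d V Vs in
       shifted_image scale B (b * q powi (2 * int i - int d)) (U i) \<subseteq> ext d U (int i + 1) \<and>
       shifted_image scale Bs (bs * q powi (int d - 2 * int i)) (U i) \<subseteq> ext d U (int i - 1)) \<and>
    (let U = dec_DsD d V Vs in
       B ` (U i) \<subseteq> ssum (ext d U) {int i - 1 .. int i + 1} \<and>
       shifted_image scale Bs (bs * q powi (int d - 2 * int i)) (U i) = {0})"
proof -
  define Ei where "Ei = (\<lambda>k::int. q powi (2 * k - int d))"
  define th where "th = (\<lambda>i::nat. a * q powi (2 * int i - int d))"
  define ths where "ths = (\<lambda>i::nat. as * q powi (int d - 2 * int i))"
  have Ei_nz: "\<And>k. Ei k \<noteq> 0" using q by (simp add: Ei_def power_int_eq_0_iff)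
  have Ei_suc: "\<And>k. Ei (k + 1) = Ei k * q * q"
  proof -
    fix k
    have "2 * (k + 1) - int d = (2 * k - int d) + 1 + 1" by simp
    then show "Ei (k + 1) = Ei k * q * q" unfolding Ei_def using q
      by (simp only: power_int_add_1 q(1) simp_thms)
  qed
  have Ei_pred: "\<And>k. Ei (k - 1) = Ei k * inverse q * inverse q"
  proof -
    fix k
    have "Ei k = Ei (k - 1) * q * q" using Ei_suc[of "k - 1"] by simp
    then show "Ei (k - 1) = Ei k * inverse q * inverse q" using q(1) by (simp add: mult.assoc)
  qed
  have Ei_rev: "\<And>k. q powi (int d - 2 * k) = inverse (Ei k)"
    unfolding Ei_def by (metis minus_diff_eq power_int_minus)
  have Ei_inj: "\<And>k k'. Ei k = Ei k' \<Longrightarrow> k = k'"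
  proof -
    fix k k' assume e: "Ei k = Ei k'"
    have "2 * k - int d = 2 * k' - int d" by (rule powi_inj[OF q]) (use e in \<open>simp add: Ei_def\<close>)
    then show "k = k'" by simp
  qed
  have th_E: "\<And>i. th i = a * Ei (int i)" by (simp add: th_def Ei_def)
  have ths_E: "\<And>i. ths i = as * inverse (Ei (int i))" by (simp add: ths_def Ei_rev)
  have lA: "lnr scale A" and lAs: "lnr scale As" using TD by (auto simp: tridiagonal_pair_def intro: lnr_linear)
  have lB: "lnr scale B" using B_lin by (rule lnr_linear)
  have lBs: "lnr scale Bs" using Bs_lin by (rule lnr_linear)
  have irr: "\<And>W. subspace W \<Longrightarrow> A ` W \<subseteq> W \<Longrightarrow> As ` W \<subseteq> W \<Longrightarrow> W = {0} \<or> W = UNIV"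
    using TD by (auto simp: tridiagonal_pair_def)
  have VA: "\<And>j. V j = {v. A v = th j *s v}" by (simp add: V_def th_def eigsp_def)
  have VsA: "\<And>j. Vs j = {v. As v = ths j *s v}" by (simp add: Vs_def ths_def eigsp_def)
  have Vsub: "\<And>j. subspace (V j)" using VA eig_subspace[OF lA] by simp
  have Vssub: "\<And>j. subspace (Vs j)" using VsA eig_subspace[OF lAs] by simp
  have thinj: "inj_on th {..d}" using ordA by (simp add: standard_ordering_def th_def)
  have thsinj: "inj_on ths {..d}" using ordAs by (simp add: standard_ordering_def ths_def)
  have Vnz: "\<And>j. j \<le> d \<Longrightarrow> V j \<noteq> {0}" using ordA by (simp add: standard_ordering_def V_def)
  have Vsnz: "\<And>j. j \<le> d \<Longrightarrow> Vs j \<noteq> {0}" using ordAs by (simp add: standard_ordering_def Vs_def)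
  have Aeig: "\<And>mu. eigsp scale A mu \<noteq> {0} \<Longrightarrow> mu \<in> th ` {..d}"
    using ordA by (simp add: standard_ordering_def th_def)
  have Aseig: "\<And>mu. eigsp scale As mu \<noteq> {0} \<Longrightarrow> mu \<in> ths ` {..d}"
    using ordAs by (simp add: standard_ordering_def ths_def)
  have AsV: "\<And>j. j \<le> d \<Longrightarrow> As ` V j \<subseteq> span (\<Union>(V ` adj d j))"
  proof -
    fix j assume j: "j \<le> d"
    have "As ` V j \<subseteq> ssum (ext d V) {int j - 1 .. int j + 1}"
      using ordA j by (simp add: standard_ordering_def V_def)
    also have "\<dots> = span (\<Union>(V ` adj d j))"
      by (subst ext_span) (auto simp: Vsub adj_def)
    finally show "As ` V j \<subseteq> span (\<Union>(V ` adj d j))" .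
  qed
  have AVs: "\<And>j. j \<le> d \<Longrightarrow> A ` Vs j \<subseteq> span (\<Union>(Vs ` adj d j))"
  proof -
    fix j assume j: "j \<le> d"
    have "A ` Vs j \<subseteq> ssum (ext d Vs) {int j - 1 .. int j + 1}"
      using ordAs j by (simp add: standard_ordering_def Vs_def)
    also have "\<dots> = span (\<Union>(Vs ` adj d j))"
      by (subst ext_span) (auto simp: Vssub adj_def)
    finally show "A ` Vs j \<subseteq> span (\<Union>(Vs ` adj d j))" .
  qed
  have Vspan: "span (\<Union>(V ` {..d})) = UNIV"
  proof -
    have "(\<Union>mu. eigsp scale A mu) \<subseteq> span (\<Union>(V ` {..d}))"
    proof (rule subsetI, elim UN_E)
      fix x mu assume x: "x \<in> eigsp scale A mu"
      show "x \<in> span (\<Union>(V ` {..d}))"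
      proof (cases "eigsp scale A mu = {0}")
        case True then show ?thesis using x by (simp add: span_zero)
      next
        case False
        then obtain j where j: "j \<le> d" "mu = th j" using Aeig by blast
        then have "x \<in> V j" using x by (simp add: VA eigsp_def)
        then show ?thesis using j by (intro span_base UN_I[of j]) auto
      qed
    qed
    then have "span (\<Union>mu. eigsp scale A mu) \<subseteq> span (\<Union>(V ` {..d}))"
      by (simp add: span_minimal)
    moreover have "span (\<Union>mu. eigsp scale A mu) = UNIV"
      using TD by (simp add: tridiagonal_pair_def diagonalizable_def)
    ultimately show ?thesis by auto
  qed
  have EXT_A: "\<And>w k. A w = (a * Ei k) *s w \<Longrightarrow> w \<in> ext d V k"
  proof -
    fix w k assume w: "A w = (a * Ei k) *s w"
    show "w \<in> ext d V k"
    proof (cases "0 \<le> k \<and> k \<le> int d")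
      case True
      then have "th (nat k) = a * Ei k" by (simp add: th_E)
      then show ?thesis using True w by (simp add: ext_def VA)
    next
      case False
      have "eigsp scale A (a * Ei k) = {0}"
      proof (rule ccontr)
        assume "eigsp scale A (a * Ei k) \<noteq> {0}"
        then obtain j where "j \<le> d" "a * Ei k = th j" using Aeig by blast
        then have "Ei k = Ei (int j)" using nzs by (simp add: th_E)
        then have "k = int j" by (rule Ei_inj)
        then show False using False \<open>j \<le> d\<close> by simp
      qed
      then have "w = 0" using w by (auto simp: eigsp_def)
      then show ?thesis using False by (auto simp: ext_def)
    qed
  qed
  have EXT_As: "\<And>w k. As w = (as * inverse (Ei k)) *s w \<Longrightarrow> w \<in> ext d Vs k"
  proof -
    fix w k assume w: "As w = (as * inverse (Ei k)) *s w"
    show "w \<in> ext d Vs k"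
    proof (cases "0 \<le> k \<and> k \<le> int d")
      case True
      then have "ths (nat k) = as * inverse (Ei k)" by (simp add: ths_E)
      then show ?thesis using True w by (simp add: ext_def VsA)
    next
      case False
      have "eigsp scale As (as * inverse (Ei k)) = {0}"
      proof (rule ccontr)
        assume "eigsp scale As (as * inverse (Ei k)) \<noteq> {0}"
        then obtain j where "j \<le> d" "as * inverse (Ei k) = ths j" using Aseig by blast
        then have "Ei k = Ei (int j)" using nzs by (simp add: ths_E)
        then have "k = int j" by (rule Ei_inj)
        then show False using False \<open>j \<le> d\<close> by simp
      qed
      then have "w = 0" using w by (auto simp: eigsp_def)
      then show ?thesis using False by (auto simp: ext_def)
    qed
  qed
  have revU: "\<And>(Z::nat \<Rightarrow> 'b set) S. \<Union>((\<lambda>j. Z (d - j)) ` S) = \<Union>(Z ` ((\<lambda>j. d - j) ` S))" by auto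
  interpret T1: tdset scale A As d Vs V th ths
    apply (rule tdset.intro[OF vector_space_axioms], rule tdset_axioms.intro)
    subgoal by (rule lA)
    subgoal by (rule lAs)
    subgoal by (rule VA)
    subgoal by (rule VsA)
    subgoal by (rule thinj)
    subgoal by (rule Vsnz) simp
    subgoal by (rule Vnz) simp
    subgoal by (rule Vspan)
    subgoal by (rule AVs)
    subgoal by (rule AsV)
    subgoal by (rule irr)
    done
  have T1U: "\<And>i. T1.UU i = dec_0s0 d V Vs i"
    by (simp add: T1.UU_def T1.FF_def T1.GG_def dec_0s0_def ssum_span Vsub Vssub atLeast0AtMost)
  have inj2: "inj_on (\<lambda>j. th (d - j)) {..d}"
  proof (rule inj_onI)
    fix x y assume "x \<in> {..d}" "y \<in> {..d}" "th (d - x) = th (d - y)"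
    then have "d - x = d - y" using thinj unfolding inj_on_def by auto
    then show "x = y" using \<open>x \<in> {..d}\<close> \<open>y \<in> {..d}\<close> by simp
  qed
  have Vspan2: "span (\<Union>((\<lambda>j. V (d - j)) ` {..d})) = UNIV"
    using Vspan rev_atMost[of d d] revU[of V "{..d}"] by (simp add: atLeast0AtMost)
  have AVs2: "\<And>j. j \<le> d \<Longrightarrow> A ` Vs (d - j) \<subseteq> span (\<Union>((\<lambda>j. Vs (d - j)) ` adj d j))"
  proof -
    fix j assume j: "j \<le> d"
    have "A ` Vs (d - j) \<subseteq> span (\<Union>(Vs ` ((\<lambda>n. d - n) ` adj d j)))" using AVs[of "d - j"] adj_rev[OF j] by simp
    then show "A ` Vs (d - j) \<subseteq> span (\<Union>((\<lambda>j. Vs (d - j)) ` adj d j))" by (simp only: revU[of Vs "adj d j"])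
  qed
  have AsV2: "\<And>j. j \<le> d \<Longrightarrow> As ` V (d - j) \<subseteq> span (\<Union>((\<lambda>j. V (d - j)) ` adj d j))"
  proof -
    fix j assume j: "j \<le> d"
    have "As ` V (d - j) \<subseteq> span (\<Union>(V ` ((\<lambda>n. d - n) ` adj d j)))" using AsV[of "d - j"] adj_rev[OF j] by simp
    then show "As ` V (d - j) \<subseteq> span (\<Union>((\<lambda>j. V (d - j)) ` adj d j))" by (simp only: revU[of V "adj d j"])
  qed
  interpret T2: tdset scale A As d "\<lambda>j. Vs (d - j)" "\<lambda>j. V (d - j)" "\<lambda>j. th (d - j)" "\<lambda>j. ths (d - j)"
    apply (rule tdset.intro[OF vector_space_axioms], rule tdset_axioms.intro)
    subgoal by (rule lA)
    subgoal by (rule lAs)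
    subgoal by (rule VA)
    subgoal by (rule VsA)
    subgoal by (rule inj2)
    subgoal using Vsnz[of d] by simp
    subgoal using Vnz[of 0] by simp
    subgoal by (rule Vspan2)
    subgoal by (rule AVs2)
    subgoal by (rule AsV2)
    subgoal by (rule irr)
    done
  have T2U: "\<And>i. i \<le> d \<Longrightarrow> T2.UU i = dec_DsD d V Vs i"
  proof -
    fix i assume i: "i \<le> d"
    have "T2.UU i = span (\<Union>(Vs ` {d - i..d})) \<inter> span (\<Union>(V ` {d - (d - i)..d}))"
      unfolding T2.UU_def T2.FF_def T2.GG_def revU[of Vs] revU[of V] using rev_atMost[of i d] rev_atMost[of "d - i" d] i
      by simp
    also have "\<dots> = dec_DsD d V Vs i" using i by (simp add: dec_DsD_def ssum_span Vsub Vssub)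
    finally show "T2.UU i = dec_DsD d V Vs i" .
  qed
  have Ei_revn: "\<And>i. i \<le> d \<Longrightarrow> Ei (int (d - i)) = inverse (Ei (int i))"
  proof -
    fix i assume i: "i \<le> d"
    have "2 * int (d - i) - int d = int d - 2 * int i" using i by (simp add: of_nat_diff)
    then show "Ei (int (d - i)) = inverse (Ei (int i))" using Ei_rev[of "int i"] by (simp add: Ei_def)
  qed
  have Ei_revn2: "\<And>i. i \<le> d \<Longrightarrow> Ei (int d - int i) = inverse (Ei (int i))"
    using Ei_revn by (simp add: of_nat_diff)
  have Ei_sucn: "\<And>i. Ei (int (Suc i)) = Ei (int i) * q * q" using Ei_suc by (metis of_nat_Suc add.commute)
  have Ei_sucn2: "\<And>i. Ei (1 + int i) = Ei (int i) * q * q" using Ei_suc by (metis add.commute)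
  have Ei_predn: "\<And>i. 0 < i \<Longrightarrow> Ei (int (i - 1)) = Ei (int i) * inverse q * inverse q"
    using Ei_pred by (simp add: of_nat_diff)
  have B1: "\<And>i u. i \<le> d \<Longrightarrow> u \<in> T1.UU i \<Longrightarrow> B u = (b * Ei (int i)) *s u"
    using B_act T1U by (simp add: Ei_def)
  have Bs2: "\<And>i u. i \<le> d \<Longrightarrow> u \<in> T2.UU i \<Longrightarrow> Bs u = (bs * inverse (Ei (int i))) *s u"
    using Bs_act T2U by (simp add: Ei_rev)
  have B1r: "\<And>i r. i \<le> d \<Longrightarrow> r \<in> (if i < d then T1.UU (i+1) else {0}) \<Longrightarrow> B r = (b * Ei (int i) * q * q) *s r"
  proof -
    fix i r assume i: "i \<le> d" and r: "r \<in> (if i < d then T1.UU (i+1) else {0})"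
    show "B r = (b * Ei (int i) * q * q) *s r"
    proof (cases "i < d")
      case True then show ?thesis using B1[of "i+1" r] r by (simp add: Ei_sucn Ei_sucn2 mult.assoc)
    next
      case False then show ?thesis using r lnrD(3)[OF lB] by simp
    qed
  qed
  have B1l: "\<And>i r. i \<le> d \<Longrightarrow> r \<in> (if 0 < i then T1.UU (i-1) else {0}) \<Longrightarrow> B r = (b * Ei (int i) * inverse q * inverse q) *s r"
  proof -
    fix i r assume i: "i \<le> d" and r: "r \<in> (if 0 < i then T1.UU (i-1) else {0})"
    show "B r = (b * Ei (int i) * inverse q * inverse q) *s r"
    proof (cases "0 < i")
      case True then show ?thesis using B1[of "i-1" r] r i by (simp add: Ei_predn Ei_pred mult.assoc)
    next
      case False then show ?thesis using r lnrD(3)[OF lB] by simp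
    qed
  qed
  have Bs2r: "\<And>i r. i \<le> d \<Longrightarrow> r \<in> (if i < d then T2.UU (i+1) else {0}) \<Longrightarrow> Bs r = (bs * inverse (Ei (int i)) * inverse q * inverse q) *s r"
  proof -
    fix i r assume i: "i \<le> d" and r: "r \<in> (if i < d then T2.UU (i+1) else {0})"
    show "Bs r = (bs * inverse (Ei (int i)) * inverse q * inverse q) *s r"
    proof (cases "i < d")
      case True then show ?thesis using Bs2[of "i+1" r] r by (simp add: Ei_sucn Ei_sucn2 mult.assoc)
    next
      case False then show ?thesis using r lnrD(3)[OF lBs] by simp
    qed
  qed
  have Bs2l: "\<And>i r. i \<le> d \<Longrightarrow> r \<in> (if 0 < i then T2.UU (i-1) else {0}) \<Longrightarrow> Bs r = (bs * inverse (Ei (int i)) * q * q) *s r"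
  proof -
    fix i r assume i: "i \<le> d" and r: "r \<in> (if 0 < i then T2.UU (i-1) else {0})"
    show "Bs r = (bs * inverse (Ei (int i)) * q * q) *s r"
    proof (cases "0 < i")
      case True then show ?thesis using Bs2[of "i-1" r] r i q(1) by (simp add: Ei_predn Ei_pred mult.assoc)
    next
      case False then show ?thesis using r lnrD(3)[OF lBs] by simp
    qed
  qed
  have R1: "\<And>v. q *s A (B v) - inverse q *s B (A v) = ((q - inverse q) * a * b) *s v"
  proof -
    fix v
    let ?S = "{v. q *s A (B v) - inverse q *s B (A v) = ((q - inverse q) * a * b) *s v}"
    have sub: "subspace ?S" by (rule lnr_sub_eq[OF lnr_comm[OF lA lB] lnr_scal])
    have "v \<in> ?S"
    proof (rule span_sub2[OF _ sub])
      show "v \<in> span (\<Union>(T1.UU ` {..d}))" using T1.span_all by simp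
      fix i u assume i: "i \<in> {..d}" and u: "u \<in> T1.UU i"
      define r where "r = A u - th (d - i) *s u"
      have Au: "A u = (a * inverse (Ei (int i))) *s u + r" using i by (simp add: r_def th_E Ei_revn Ei_revn2)
      have e: "q *s A (B u) - inverse q *s B (A u) = ((q - inverse q) * (a * inverse (Ei (int i))) * (b * Ei (int i))) *s u
          + (q * (b * Ei (int i)) - inverse q * (b * Ei (int i) * q * q)) *s r"
        by (rule shape1[OF lA lB B1 Au B1r]) (use i u T1.raise[of i u] r_def in auto)
      have c1: "(q - inverse q) * (a * inverse (Ei (int i))) * (b * Ei (int i)) = (q - inverse q) * a * b"
        using Ei_nz[of "int i"] by (simp add: field_simps)
      have c2: "q * (b * Ei (int i)) - inverse q * (b * Ei (int i) * q * q) = 0"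
        using q(1) by (simp add: field_simps)
      show "u \<in> ?S" using e c1 c2 by simp
    qed
    then show "q *s A (B v) - inverse q *s B (A v) = ((q - inverse q) * a * b) *s v" by simp
  qed
  have R2: "\<And>v. q *s B (As v) - inverse q *s As (B v) = ((q - inverse q) * as * b) *s v"
  proof -
    fix v
    let ?S = "{v. q *s B (As v) - inverse q *s As (B v) = ((q - inverse q) * as * b) *s v}"
    have sub: "subspace ?S" by (rule lnr_sub_eq[OF lnr_comm[OF lB lAs] lnr_scal])
    have "v \<in> ?S"
    proof (rule span_sub2[OF _ sub])
      show "v \<in> span (\<Union>(T1.UU ` {..d}))" using T1.span_all by simp
      fix i u assume i: "i \<in> {..d}" and u: "u \<in> T1.UU i"
      define r where "r = As u - ths i *s u"
      have Au: "As u = (as * inverse (Ei (int i))) *s u + r" using i by (simp add: r_def ths_E)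
      have e: "q *s B (As u) - inverse q *s As (B u) = ((q - inverse q) * (as * inverse (Ei (int i))) * (b * Ei (int i))) *s u
          + (q * (b * Ei (int i) * inverse q * inverse q) - inverse q * (b * Ei (int i))) *s r"
        by (rule shape2[OF lAs lB B1 Au B1l]) (use i u T1.lower[of i u] r_def in auto)
      have c1: "(q - inverse q) * (as * inverse (Ei (int i))) * (b * Ei (int i)) = (q - inverse q) * as * b"
        using Ei_nz[of "int i"] by (simp add: field_simps)
      have c2: "q * (b * Ei (int i) * inverse q * inverse q) - inverse q * (b * Ei (int i)) = 0"
        using q(1) by (simp add: field_simps)
      show "u \<in> ?S" using e c1 c2 by simp
    qed
    then show "q *s B (As v) - inverse q *s As (B v) = ((q - inverse q) * as * b) *s v" by simp
  qed
  have R3: "\<And>v. q *s Bs (A v) - inverse q *s A (Bs v) = ((q - inverse q) * a * bs) *s v"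
  proof -
    fix v
    let ?S = "{v. q *s Bs (A v) - inverse q *s A (Bs v) = ((q - inverse q) * a * bs) *s v}"
    have sub: "subspace ?S" by (rule lnr_sub_eq[OF lnr_comm[OF lBs lA] lnr_scal])
    have "v \<in> ?S"
    proof (rule span_sub2[OF _ sub])
      show "v \<in> span (\<Union>(T2.UU ` {..d}))" using T2.span_all by simp
      fix i u assume i: "i \<in> {..d}" and u: "u \<in> T2.UU i"
      define r where "r = A u - th i *s u"
      have Au: "A u = (a * Ei (int i)) *s u + r" using i by (simp add: r_def th_E)
      have rr: "r \<in> (if i < d then T2.UU (i+1) else {0})" using T2.raise[of i u] i u by (simp add: r_def)
      have e: "q *s Bs (A u) - inverse q *s A (Bs u) = ((q - inverse q) * (a * Ei (int i)) * (bs * inverse (Ei (int i)))) *s u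
          + (q * (bs * inverse (Ei (int i)) * inverse q * inverse q) - inverse q * (bs * inverse (Ei (int i)))) *s r"
        by (rule shape2[OF lA lBs Bs2 Au Bs2r]) (use i u rr in auto)
      have c1: "(q - inverse q) * (a * Ei (int i)) * (bs * inverse (Ei (int i))) = (q - inverse q) * a * bs"
        using Ei_nz[of "int i"] by (simp add: field_simps)
      have c2: "q * (bs * inverse (Ei (int i)) * inverse q * inverse q) - inverse q * (bs * inverse (Ei (int i))) = 0"
        using q(1) by (simp add: field_simps)
      show "u \<in> ?S" using e c1 c2 by simp
    qed
    then show "q *s Bs (A v) - inverse q *s A (Bs v) = ((q - inverse q) * a * bs) *s v" by simp
  qed
  have R4: "\<And>v. q *s As (Bs v) - inverse q *s Bs (As v) = ((q - inverse q) * as * bs) *s v"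
  proof -
    fix v
    let ?S = "{v. q *s As (Bs v) - inverse q *s Bs (As v) = ((q - inverse q) * as * bs) *s v}"
    have sub: "subspace ?S" by (rule lnr_sub_eq[OF lnr_comm[OF lAs lBs] lnr_scal])
    have "v \<in> ?S"
    proof (rule span_sub2[OF _ sub])
      show "v \<in> span (\<Union>(T2.UU ` {..d}))" using T2.span_all by simp
      fix i u assume i: "i \<in> {..d}" and u: "u \<in> T2.UU i"
      define r where "r = As u - ths (d - i) *s u"
      have Au: "As u = (as * Ei (int i)) *s u + r" using i by (simp add: r_def ths_E Ei_revn Ei_revn2)
      have rr: "r \<in> (if 0 < i then T2.UU (i-1) else {0})" using T2.lower[of i u] i u by (simp add: r_def)
      have e: "q *s As (Bs u) - inverse q *s Bs (As u) = ((q - inverse q) * (as * Ei (int i)) * (bs * inverse (Ei (int i)))) *s u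
          + (q * (bs * inverse (Ei (int i))) - inverse q * (bs * inverse (Ei (int i)) * q * q)) *s r"
        by (rule shape1[OF lAs lBs Bs2 Au Bs2l]) (use i u rr in auto)
      have c1: "(q - inverse q) * (as * Ei (int i)) * (bs * inverse (Ei (int i))) = (q - inverse q) * as * bs"
        using Ei_nz[of "int i"] by (simp add: field_simps)
      have c2: "q * (bs * inverse (Ei (int i))) - inverse q * (bs * inverse (Ei (int i)) * q * q) = 0"
        using q(1) by (simp add: field_simps)
      show "u \<in> ?S" using e c1 c2 by simp
    qed
    then show "q *s As (Bs v) - inverse q *s Bs (As v) = ((q - inverse q) * as * bs) *s v" by simp
  qed
  have P1: "\<And>j y. y \<in> V j \<Longrightarrow> B y - (b * inverse (Ei (int j))) *s y \<in> ext d V (int j - 1)"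
  proof -
    fix j y assume y: "y \<in> V j"
    have Ay: "A y = (a * Ei (int j)) *s y" using y by (simp add: VA th_E)
    have "A (B y - (b * inverse (Ei (int j))) *s y) = (inverse q * inverse q * (a * Ei (int j))) *s (B y - (b * inverse (Ei (int j))) *s y)"
      by (rule shift1[OF lA lB R1 Ay _ q(1)]) (use Ei_nz[of "int j"] in \<open>simp add: field_simps\<close>)
    then show "B y - (b * inverse (Ei (int j))) *s y \<in> ext d V (int j - 1)"
      by (intro EXT_A) (simp add: Ei_pred mult_ac)
  qed
  have P2: "\<And>j y. y \<in> V j \<Longrightarrow> Bs y - (bs * inverse (Ei (int j))) *s y \<in> ext d V (int j + 1)"
  proof -
    fix j y assume y: "y \<in> V j"
    have Ay: "A y = (a * Ei (int j)) *s y" using y by (simp add: VA th_E)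
    have "A (Bs y - (bs * inverse (Ei (int j))) *s y) = (q * q * (a * Ei (int j))) *s (Bs y - (bs * inverse (Ei (int j))) *s y)"
      by (rule shift2[OF lA lBs R3 Ay _ q(1)]) (use Ei_nz[of "int j"] in \<open>simp add: field_simps\<close>)
    then show "Bs y - (bs * inverse (Ei (int j))) *s y \<in> ext d V (int j + 1)"
      by (intro EXT_A) (simp add: Ei_suc mult_ac)
  qed
  have P3: "\<And>j y. y \<in> Vs j \<Longrightarrow> B y - (b * Ei (int j)) *s y \<in> ext d Vs (int j - 1)"
  proof -
    fix j y assume y: "y \<in> Vs j"
    have Ay: "As y = (as * inverse (Ei (int j))) *s y" using y by (simp add: VsA ths_E)
    have "As (B y - (b * Ei (int j)) *s y) = (q * q * (as * inverse (Ei (int j)))) *s (B y - (b * Ei (int j)) *s y)"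
      by (rule shift2[OF lAs lB R2 Ay _ q(1)]) (use Ei_nz[of "int j"] in \<open>simp add: field_simps\<close>)
    then show "B y - (b * Ei (int j)) *s y \<in> ext d Vs (int j - 1)"
      by (intro EXT_As) (simp add: Ei_pred mult_ac q(1))
  qed
  have P4: "\<And>j y. y \<in> Vs j \<Longrightarrow> Bs y - (bs * Ei (int j)) *s y \<in> ext d Vs (int j + 1)"
  proof -
    fix j y assume y: "y \<in> Vs j"
    have Ay: "As y = (as * inverse (Ei (int j))) *s y" using y by (simp add: VsA ths_E)
    have "As (Bs y - (bs * Ei (int j)) *s y) = (inverse q * inverse q * (as * inverse (Ei (int j)))) *s (Bs y - (bs * Ei (int j)) *s y)"
      by (rule shift1[OF lAs lBs R4 Ay _ q(1)]) (use Ei_nz[of "int j"] in \<open>simp add: field_simps\<close>)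
    then show "Bs y - (bs * Ei (int j)) *s y \<in> ext d Vs (int j + 1)"
      by (intro EXT_As) (simp add: Ei_suc mult_ac q(1))
  qed
  have Ei_fold: "\<And>i. q powi (2 * int i - int d) = Ei (int i)" by (simp add: Ei_def)
  have ssV: "\<And>I. finite I \<Longrightarrow> ssum V I = span (\<Union>(V ` I))" using ssum_span Vsub by blast
  have ssVs: "\<And>I. finite I \<Longrightarrow> ssum Vs I = span (\<Union>(Vs ` I))" using ssum_span Vssub by blast
  have spV: "\<And>j. span (V j) = V j" using Vsub by simp
  have spVs: "\<And>j. span (Vs j) = Vs j" using Vssub by simp
  have ext_m1: "\<And>U i. i \<le> d \<Longrightarrow> ext d U (int i - 1) = (if 0 < i then U (i - 1) else {0})"
    by (auto simp: ext_def nat_diff_distrib)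
  have ext_p1: "\<And>U i. i \<le> d \<Longrightarrow> ext d U (int i + 1) = (if i < d then U (i + 1) else {0})"
    by (auto simp: ext_def nat_add_distrib)
  have U3: "\<And>k. dec_0sD d V Vs k = span (\<Union>(Vs ` {..k})) \<inter> span (\<Union>(V ` {k..d}))"
    by (simp add: dec_0sD_def ssV ssVs atLeast0AtMost)
  have C3a: "\<And>i u. i \<le> d \<Longrightarrow> u \<in> dec_0sD d V Vs i \<Longrightarrow>
      B u - (b * Ei (int i)) *s u \<in> ext d (dec_0sD d V Vs) (int i - 1)"
  proof -
    fix i u assume i: "i \<le> d" and u: "u \<in> dec_0sD d V Vs i"
    show "B u - (b * Ei (int i)) *s u \<in> ext d (dec_0sD d V Vs) (int i - 1)"
    proof (cases "i = 0")
      case True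
      then have "u \<in> Vs 0" using u by (simp add: U3 spVs)
      then have "B u - (b * Ei (int i)) *s u = 0" using P3[of u 0] True by (simp add: ext_def)
      then show ?thesis using True by (simp add: ext_def)
    next
      case False
      have h1: "\<And>j y. j \<in> {..i} \<Longrightarrow> y \<in> Vs j \<Longrightarrow> B y - (b * Ei (int i)) *s y \<in> span (\<Union>(Vs ` {..i-1}))"
      proof -
        fix j y assume j: "j \<in> {..i}" and y: "y \<in> Vs j"
        show "B y - (b * Ei (int i)) *s y \<in> span (\<Union>(Vs ` {..i-1}))"
          by (rule step2[where f=B and jz=i, OF P3[OF y] _ _ _ y]) (use j in auto)
      qed
      have h2: "\<And>j y. j \<in> {i..d} \<Longrightarrow> y \<in> V j \<Longrightarrow> B y - (b * Ei (int i)) *s y \<in> span (\<Union>(V ` {i-1..d}))"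
      proof -
        fix j y assume j: "j \<in> {i..d}" and y: "y \<in> V j"
        show "B y - (b * Ei (int i)) *s y \<in> span (\<Union>(V ` {i-1..d}))"
          by (rule step[where f=B, OF P1[OF y] _ _ y]) (use j in auto)
      qed
      have "B u - (b * Ei (int i)) *s u \<in> span (\<Union>(Vs ` {..i-1})) \<inter> span (\<Union>(V ` {i-1..d}))"
        using two[where f="\<lambda>x. B x - (b * Ei (int i)) *s x" and Za=Vs and Ia="{..i}" and Ja="{..i-1}"
            and Zb=V and Ib="{i..d}" and Jb="{i-1..d}", OF lnr_shift[OF lB] _ _ h1 h2] u by (simp add: U3)
      then show ?thesis using False i by (simp add: ext_m1 U3)
    qed
  qed
  have C3b: "\<And>i u. i \<le> d \<Longrightarrow> u \<in> dec_0sD d V Vs i \<Longrightarrow>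
      Bs u - (bs * inverse (Ei (int i))) *s u \<in> ext d (dec_0sD d V Vs) (int i + 1)"
  proof -
    fix i u assume i: "i \<le> d" and u: "u \<in> dec_0sD d V Vs i"
    show "Bs u - (bs * inverse (Ei (int i))) *s u \<in> ext d (dec_0sD d V Vs) (int i + 1)"
    proof (cases "i = d")
      case True
      then have "u \<in> V d" using u by (simp add: U3 spV)
      then have "Bs u - (bs * inverse (Ei (int i))) *s u = 0" using P2[of u d] True by (simp add: ext_def)
      then show ?thesis using True by (simp add: ext_def)
    next
      case False
      have h1: "\<And>j y. j \<in> {..i} \<Longrightarrow> y \<in> Vs j \<Longrightarrow> Bs y - (bs * inverse (Ei (int i))) *s y \<in> span (\<Union>(Vs ` {..i+1}))"
      proof -
        fix j y assume j: "j \<in> {..i}" and y: "y \<in> Vs j"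
        show "Bs y - (bs * inverse (Ei (int i))) *s y \<in> span (\<Union>(Vs ` {..i+1}))"
          by (rule step1[where f=Bs, OF P4[OF y] _ _ y]) (use j in auto)
      qed
      have h2: "\<And>j y. j \<in> {i..d} \<Longrightarrow> y \<in> V j \<Longrightarrow> Bs y - (bs * inverse (Ei (int i))) *s y \<in> span (\<Union>(V ` {i+1..d}))"
      proof -
        fix j y assume j: "j \<in> {i..d}" and y: "y \<in> V j"
        show "Bs y - (bs * inverse (Ei (int i))) *s y \<in> span (\<Union>(V ` {i+1..d}))"
          by (rule step2[where f=Bs and jz=i, OF P2[OF y] _ _ _ y]) (use j in auto)
      qed
      have "Bs u - (bs * inverse (Ei (int i))) *s u \<in> span (\<Union>(Vs ` {..i+1})) \<inter> span (\<Union>(V ` {i+1..d}))"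
        using two[where f="\<lambda>x. Bs x - (bs * inverse (Ei (int i))) *s x" and Za=Vs and Ia="{..i}" and Ja="{..i+1}"
            and Zb=V and Ib="{i..d}" and Jb="{i+1..d}", OF lnr_shift[OF lBs] _ _ h1 h2] u by (simp add: U3)
      then show ?thesis using False i by (simp add: ext_p1 U3)
    qed
  qed
  have U5: "\<And>k. dec_Ds0 d V Vs k = span (\<Union>(Vs ` {d-k..d})) \<inter> span (\<Union>(V ` {..d-k}))"
    by (simp add: dec_Ds0_def ssV ssVs atLeast0AtMost)
  have Ed0: "Ei (int d) = inverse (Ei 0)" using Ei_revn2[of 0] by simp
  have C5a: "\<And>i u. i \<le> d \<Longrightarrow> u \<in> dec_Ds0 d V Vs i \<Longrightarrow>
      B u - (b * Ei (int i)) *s u \<in> ext d (dec_Ds0 d V Vs) (int i + 1)"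
  proof -
    fix i u assume i: "i \<le> d" and u: "u \<in> dec_Ds0 d V Vs i"
    show "B u - (b * Ei (int i)) *s u \<in> ext d (dec_Ds0 d V Vs) (int i + 1)"
    proof (cases "i = d")
      case True
      then have "u \<in> V 0" using u by (simp add: U5 spV)
      then have "B u - (b * Ei (int i)) *s u = 0" using P1[of u 0] True Ed0 by (simp add: ext_def)
      then show ?thesis using True by (simp add: ext_def)
    next
      case False
      have h1: "\<And>j y. j \<in> {d-i..d} \<Longrightarrow> y \<in> Vs j \<Longrightarrow> B y - (b * Ei (int i)) *s y \<in> span (\<Union>(Vs ` {d-(i+1)..d}))"
      proof -
        fix j y assume j: "j \<in> {d-i..d}" and y: "y \<in> Vs j"
        show "B y - (b * Ei (int i)) *s y \<in> span (\<Union>(Vs ` {d-(i+1)..d}))"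
          by (rule step1[where f=B, OF P3[OF y] _ _ y]) (use j in auto)
      qed
      have h2: "\<And>j y. j \<in> {..d-i} \<Longrightarrow> y \<in> V j \<Longrightarrow> B y - (b * Ei (int i)) *s y \<in> span (\<Union>(V ` {..d-(i+1)}))"
      proof -
        fix j y assume j: "j \<in> {..d-i}" and y: "y \<in> V j"
        show "B y - (b * Ei (int i)) *s y \<in> span (\<Union>(V ` {..d-(i+1)}))"
          by (rule step2[where f=B and jz="d-i", OF P1[OF y] _ _ _ y]) (use j i in \<open>auto simp: Ei_revn Ei_revn2\<close>)
      qed
      have "B u - (b * Ei (int i)) *s u \<in> span (\<Union>(Vs ` {d-(i+1)..d})) \<inter> span (\<Union>(V ` {..d-(i+1)}))"
        using two[where f="\<lambda>x. B x - (b * Ei (int i)) *s x" and Za=Vs and Ia="{d-i..d}" and Ja="{d-(i+1)..d}"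
            and Zb=V and Ib="{..d-i}" and Jb="{..d-(i+1)}", OF lnr_shift[OF lB] _ _ h1 h2] u by (simp add: U5)
      then show ?thesis using False i by (simp add: ext_p1 U5)
    qed
  qed
  have C5b: "\<And>i u. i \<le> d \<Longrightarrow> u \<in> dec_Ds0 d V Vs i \<Longrightarrow>
      Bs u - (bs * inverse (Ei (int i))) *s u \<in> ext d (dec_Ds0 d V Vs) (int i - 1)"
  proof -
    fix i u assume i: "i \<le> d" and u: "u \<in> dec_Ds0 d V Vs i"
    show "Bs u - (bs * inverse (Ei (int i))) *s u \<in> ext d (dec_Ds0 d V Vs) (int i - 1)"
    proof (cases "i = 0")
      case True
      then have "u \<in> Vs d" using u by (simp add: U5 spVs)
      then have "Bs u - (bs * inverse (Ei (int i))) *s u = 0" using P4[of u d] True Ed0 by (simp add: ext_def)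
      then show ?thesis using True by (simp add: ext_def)
    next
      case False
      have h1: "\<And>j y. j \<in> {d-i..d} \<Longrightarrow> y \<in> Vs j \<Longrightarrow> Bs y - (bs * inverse (Ei (int i))) *s y \<in> span (\<Union>(Vs ` {d-(i-1)..d}))"
      proof -
        fix j y assume j: "j \<in> {d-i..d}" and y: "y \<in> Vs j"
        show "Bs y - (bs * inverse (Ei (int i))) *s y \<in> span (\<Union>(Vs ` {d-(i-1)..d}))"
          by (rule step2[where f=Bs and jz="d-i", OF P4[OF y] _ _ _ y]) (use j i False in \<open>auto simp: Ei_revn Ei_revn2\<close>)
      qed
      have h2: "\<And>j y. j \<in> {..d-i} \<Longrightarrow> y \<in> V j \<Longrightarrow> Bs y - (bs * inverse (Ei (int i))) *s y \<in> span (\<Union>(V ` {..d-(i-1)}))"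
      proof -
        fix j y assume j: "j \<in> {..d-i}" and y: "y \<in> V j"
        show "Bs y - (bs * inverse (Ei (int i))) *s y \<in> span (\<Union>(V ` {..d-(i-1)}))"
          by (rule step1[where f=Bs, OF P2[OF y] _ _ y]) (use j i False in auto)
      qed
      have "Bs u - (bs * inverse (Ei (int i))) *s u \<in> span (\<Union>(Vs ` {d-(i-1)..d})) \<inter> span (\<Union>(V ` {..d-(i-1)}))"
        using two[where f="\<lambda>x. Bs x - (bs * inverse (Ei (int i))) *s x" and Za=Vs and Ia="{d-i..d}" and Ja="{d-(i-1)..d}"
            and Zb=V and Ib="{..d-i}" and Jb="{..d-(i-1)}", OF lnr_shift[OF lBs] _ _ h1 h2] u by (simp add: U5)
      then show ?thesis using False i by (simp add: ext_m1 U5)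
    qed
  qed
  have sub0s0: "\<And>k. subspace (dec_0s0 d V Vs k)" using T1U T1.UU_sub by metis
  have subDsD: "\<And>k. subspace (dec_DsD d V Vs k)"
    by (simp add: dec_DsD_def ssV ssVs subspace_inter)
  have C4a: "\<And>i. i \<le> d \<Longrightarrow> shifted_image scale B (b * Ei (int i)) (dec_0s0 d V Vs i) = {0}"
  proof -
    fix i assume i: "i \<le> d"
    have "\<And>u. u \<in> dec_0s0 d V Vs i \<Longrightarrow> B u - (b * Ei (int i)) *s u = 0"
      using B1[OF i] T1U by simp
    moreover have "0 \<in> dec_0s0 d V Vs i" using sub0s0 subspace_0 by blast
    ultimately show "shifted_image scale B (b * Ei (int i)) (dec_0s0 d V Vs i) = {0}"
      unfolding shifted_image_def by force
  qed
  have C6b: "\<And>i. i \<le> d \<Longrightarrow> shifted_image scale Bs (bs * inverse (Ei (int i))) (dec_DsD d V Vs i) = {0}"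
  proof -
    fix i assume i: "i \<le> d"
    have "\<And>u. u \<in> dec_DsD d V Vs i \<Longrightarrow> Bs u - (bs * inverse (Ei (int i))) *s u = 0"
      using Bs2[OF i] T2U[OF i] by simp
    moreover have "0 \<in> dec_DsD d V Vs i" using subDsD subspace_0 by blast
    ultimately show "shifted_image scale Bs (bs * inverse (Ei (int i))) (dec_DsD d V Vs i) = {0}"
      unfolding shifted_image_def by force
  qed
  have C4b: "\<And>i. i \<le> d \<Longrightarrow> Bs ` (dec_0s0 d V Vs i) \<subseteq> ssum (ext d (dec_0s0 d V Vs)) {int i - 1 .. int i + 1}"
  proof -
    fix i assume i: "i \<le> d"
    have e: "ssum (ext d (dec_0s0 d V Vs)) {int i - 1 .. int i + 1} = span (\<Union>(T1.UU ` adj d i))"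
      by (subst ext_span) (auto simp: sub0s0 T1U adj_def)
    show "Bs ` (dec_0s0 d V Vs i) \<subseteq> ssum (ext d (dec_0s0 d V Vs)) {int i - 1 .. int i + 1}"
    proof (rule image_subsetI)
      fix u assume u: "u \<in> dec_0s0 d V Vs i"
      then have uF: "u \<in> span (\<Union>(Vs ` {..i}))" and uG: "u \<in> span (\<Union>(V ` {..d-i}))"
        using T1U[of i] by (auto simp: T1.UU_def T1.FF_def T1.GG_def)
      have "Bs u \<in> T1.FF (min (i+1) d)" unfolding T1.FF_def
      proof (rule span_img2[where f=Bs and I="{..i}" and Z=Vs, OF lBs _ subspace_span uF])
        fix j y assume j: "j \<in> {..i}" and y: "y \<in> Vs j"
        show "Bs y \<in> span (\<Union>(Vs ` {..min (i+1) d}))"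
          by (rule step0[where f=Bs, OF P4[OF y] _ _ y]) (use j i in auto)
      qed
      moreover have "Bs u \<in> T1.GG (min (d-i+1) d)" unfolding T1.GG_def
      proof (rule span_img2[where f=Bs and I="{..d-i}" and Z=V, OF lBs _ subspace_span uG])
        fix j y assume j: "j \<in> {..d-i}" and y: "y \<in> V j"
        show "Bs y \<in> span (\<Union>(V ` {..min (d-i+1) d}))"
          by (rule step0[where f=Bs, OF P2[OF y] _ _ y]) (use j i in auto)
      qed
      ultimately have "Bs u \<in> span (\<Union>(T1.UU ` adj d i))" using T1.tri[OF i] by blast
      then show "Bs u \<in> ssum (ext d (dec_0s0 d V Vs)) {int i - 1 .. int i + 1}" using e by simp
    qed
  qed
  have T2F: "\<And>k. k \<le> d \<Longrightarrow> T2.FF k = span (\<Union>(Vs ` {d-k..d}))"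
    unfolding T2.FF_def revU[of Vs] using rev_atMost by simp
  have T2G: "\<And>k. k \<le> d \<Longrightarrow> T2.GG k = span (\<Union>(V ` {d-k..d}))"
    unfolding T2.GG_def revU[of V] using rev_atMost by simp
  have C6a: "\<And>i. i \<le> d \<Longrightarrow> B ` (dec_DsD d V Vs i) \<subseteq> ssum (ext d (dec_DsD d V Vs)) {int i - 1 .. int i + 1}"
  proof -
    fix i assume i: "i \<le> d"
    have "\<Union>(T2.UU ` adj d i) = \<Union>(dec_DsD d V Vs ` adj d i)"
      by (rule arg_cong[where f=Union], rule image_cong) (auto simp: adj_def T2U)
    then have e: "ssum (ext d (dec_DsD d V Vs)) {int i - 1 .. int i + 1} = span (\<Union>(T2.UU ` adj d i))"
      by (subst ext_span) (auto simp: subDsD adj_def)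
    show "B ` (dec_DsD d V Vs i) \<subseteq> ssum (ext d (dec_DsD d V Vs)) {int i - 1 .. int i + 1}"
    proof (rule image_subsetI)
      fix u assume u: "u \<in> dec_DsD d V Vs i"
      then have uF: "u \<in> span (\<Union>(Vs ` {d-i..d}))" and uG: "u \<in> span (\<Union>(V ` {i..d}))"
        by (auto simp: dec_DsD_def ssV ssVs)
      have "B u \<in> T2.FF (min (i+1) d)" unfolding T2F[OF min.cobounded2]
      proof (rule span_img2[where f=B and I="{d-i..d}" and Z=Vs, OF lB _ subspace_span uF])
        fix j y assume j: "j \<in> {d-i..d}" and y: "y \<in> Vs j"
        show "B y \<in> span (\<Union>(Vs ` {d - min (i+1) d..d}))"
          by (rule step0[where f=B, OF P3[OF y] _ _ y]) (use j i in auto)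
      qed
      moreover have "B u \<in> T2.GG (min (d-i+1) d)" unfolding T2G[OF min.cobounded2]
      proof (rule span_img2[where f=B and I="{i..d}" and Z=V, OF lB _ subspace_span uG])
        fix j y assume j: "j \<in> {i..d}" and y: "y \<in> V j"
        show "B y \<in> span (\<Union>(V ` {d - min (d-i+1) d..d}))"
          by (rule step0[where f=B, OF P1[OF y] _ _ y]) (use j i in auto)
      qed
      moreover have "u \<in> T2.UU i" using T2U[OF i] u by simp
      ultimately have "B u \<in> span (\<Union>(T2.UU ` adj d i))" using T2.tri[OF i] by blast
      then show "B u \<in> ssum (ext d (dec_DsD d V Vs)) {int i - 1 .. int i + 1}" using e by simp
    qed
  qed
  have d0D: "dec_0D d V Vs = V" by (simp add: fun_eq_iff dec_0D_def)
  have d0sDs: "dec_0sDs d V Vs = Vs" by (simp add: fun_eq_iff dec_0sDs_def)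
  show ?thesis
  proof (intro allI impI)
    fix i assume i: "i \<le> d"
    have C1a: "shifted_image scale B (b * inverse (Ei (int i))) (V i) \<subseteq> ext d V (int i - 1)"
      using P1 by (auto simp: shifted_image_def)
    have C1b: "shifted_image scale Bs (bs * inverse (Ei (int i))) (V i) \<subseteq> ext d V (int i + 1)"
      using P2 by (auto simp: shifted_image_def)
    have C2a: "shifted_image scale B (b * Ei (int i)) (Vs i) \<subseteq> ext d Vs (int i - 1)"
      using P3 by (auto simp: shifted_image_def)
    have C2b: "shifted_image scale Bs (bs * Ei (int i)) (Vs i) \<subseteq> ext d Vs (int i + 1)"
      using P4 by (auto simp: shifted_image_def)
    have C3: "shifted_image scale B (b * Ei (int i)) (dec_0sD d V Vs i) \<subseteq> ext d (dec_0sD d V Vs) (int i - 1)"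
      "shifted_image scale Bs (bs * inverse (Ei (int i))) (dec_0sD d V Vs i) \<subseteq> ext d (dec_0sD d V Vs) (int i + 1)"
      using C3a[OF i] C3b[OF i] by (auto simp: shifted_image_def)
    have C5: "shifted_image scale B (b * Ei (int i)) (dec_Ds0 d V Vs i) \<subseteq> ext d (dec_Ds0 d V Vs) (int i + 1)"
      "shifted_image scale Bs (bs * inverse (Ei (int i))) (dec_Ds0 d V Vs i) \<subseteq> ext d (dec_Ds0 d V Vs) (int i - 1)"
      using C5a[OF i] C5b[OF i] by (auto simp: shifted_image_def)
    show "(let U = dec_0D d V Vs in
       shifted_image scale B (b * q powi (int d - 2 * int i)) (U i) \<subseteq> ext d U (int i - 1) \<and>
       shifted_image scale Bs (bs * q powi (int d - 2 * int i)) (U i) \<subseteq> ext d U (int i + 1)) \<and>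
    (let U = dec_0sDs d V Vs in
       shifted_image scale B (b * q powi (2 * int i - int d)) (U i) \<subseteq> ext d U (int i - 1) \<and>
       shifted_image scale Bs (bs * q powi (2 * int i - int d)) (U i) \<subseteq> ext d U (int i + 1)) \<and>
    (let U = dec_0sD d V Vs in
       shifted_image scale B (b * q powi (2 * int i - int d)) (U i) \<subseteq> ext d U (int i - 1) \<and>
       shifted_image scale Bs (bs * q powi (int d - 2 * int i)) (U i) \<subseteq> ext d U (int i + 1)) \<and>
    (let U = dec_0s0 d V Vs in
       shifted_image scale B (b * q powi (2 * int i - int d)) (U i) = {0} \<and>
       Bs ` (U i) \<subseteq> ssum (ext d U) {int i - 1 .. int i + 1}) \<and>
    (let U = dec_Ds0 d V Vs in
       shifted_image scale B (b * q powi (2 * int i - int d)) (U i) \<subseteq> ext d U (int i + 1) \<and>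
       shifted_image scale Bs (bs * q powi (int d - 2 * int i)) (U i) \<subseteq> ext d U (int i - 1)) \<and>
    (let U = dec_DsD d V Vs in
       B ` (U i) \<subseteq> ssum (ext d U) {int i - 1 .. int i + 1} \<and>
       shifted_image scale Bs (bs * q powi (int d - 2 * int i)) (U i) = {0})"
      unfolding Let_def Ei_fold Ei_rev d0D d0sDs
      using C1a C1b C2a C2b C3 C4a[OF i] C4b[OF i] C5 C6a[OF i] C6b[OF i] by blast
  qed
qed
end

theorem theorem8p1:
  fixes scale :: "'k::field \<Rightarrow> 'v::ab_group_add \<Rightarrow> 'v"
    and A As B Bs :: "'v \<Rightarrow> 'v"
    and q a as b bs :: 'k
    and d :: nat
  assumes K: "alg_closed TYPE('k)"
    and q: "q \<noteq> 0" "not_root_of_unity q"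
    and vs: "vector_space scale"
    and fin: "\<exists>S. finite S \<and> module.span scale S = UNIV"
    and nz: "\<exists>v::'v. v \<noteq> 0"
    and TD: "tridiagonal_pair scale A As"
    and nzs: "a \<noteq> 0" "as \<noteq> 0" "b \<noteq> 0" "bs \<noteq> 0"
    and ordA: "standard_ordering scale A As d (\<lambda>i. a * q powi (2 * int i - int d))"
    and ordAs: "standard_ordering scale As A d (\<lambda>i. as * q powi (int d - 2 * int i))"
    and V_def: "V = (\<lambda>i. eigsp scale A (a * q powi (2 * int i - int d)))"
    and Vs_def: "Vs = (\<lambda>i. eigsp scale As (as * q powi (int d - 2 * int i)))"
    and B_lin: "Vector_Spaces.linear scale scale B"
    and B_act: "\<And>i u. i \<le> d \<Longrightarrow> u \<in> dec_0s0 d V Vs i \<Longrightarrow> B u = scale (b * q powi (2 * int i - int d)) u"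
    and Bs_lin: "Vector_Spaces.linear scale scale Bs"
    and Bs_act: "\<And>i u. i \<le> d \<Longrightarrow> u \<in> dec_DsD d V Vs i \<Longrightarrow> Bs u = scale (bs * q powi (int d - 2 * int i)) u"
  shows "\<forall>i\<le>d.
    (let U = dec_0D d V Vs in
       shifted_image scale B (b * q powi (int d - 2 * int i)) (U i) \<subseteq> ext d U (int i - 1) \<and>
       shifted_image scale Bs (bs * q powi (int d - 2 * int i)) (U i) \<subseteq> ext d U (int i + 1)) \<and>
    (let U = dec_0sDs d V Vs in
       shifted_image scale B (b * q powi (2 * int i - int d)) (U i) \<subseteq> ext d U (int i - 1) \<and>
       shifted_image scale Bs (bs * q powi (2 * int i - int d)) (U i) \<subseteq> ext d U (int i + 1)) \<and>
    (let U = dec_0sD d V Vs in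
       shifted_image scale B (b * q powi (2 * int i - int d)) (U i) \<subseteq> ext d U (int i - 1) \<and>
       shifted_image scale Bs (bs * q powi (int d - 2 * int i)) (U i) \<subseteq> ext d U (int i + 1)) \<and>
    (let U = dec_0s0 d V Vs in
       shifted_image scale B (b * q powi (2 * int i - int d)) (U i) = {0} \<and>
       Bs ` (U i) \<subseteq> ssum (ext d U) {int i - 1 .. int i + 1}) \<and>
    (let U = dec_Ds0 d V Vs in
       shifted_image scale B (b * q powi (2 * int i - int d)) (U i) \<subseteq> ext d U (int i + 1) \<and>
       shifted_image scale Bs (bs * q powi (int d - 2 * int i)) (U i) \<subseteq> ext d U (int i - 1)) \<and>
    (let U = dec_DsD d V Vs in
       B ` (U i) \<subseteq> ssum (ext d U) {int i - 1 .. int i + 1} \<and>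
       shifted_image scale Bs (bs * q powi (int d - 2 * int i)) (U i) = {0})"
  by (rule vector_space.main[OF vs q TD nzs ordA ordAs V_def Vs_def B_lin B_act Bs_lin Bs_act])

end
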